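(* On $\mathcal M_F$, for every $\ell\ge1$ and $1\le i\le k$: (1) $\nabla^\ell R(\partial_{u_0},\partial_{u_i},\partial_{u_i},\partial_{s_i};\partial_{u_i},\dots,\partial_{u_i})=f_i^{(\ell+1)}(u_i)$. (2) $\nabla^\ell R(\partial_{u_0},\partial_{u_i},\partial_{u_i},\partial_{u_0};\partial_{u_i},\dots,\partial_{u_i})$ is a function of $u_i$ alone, expressible as an algebraic combination of $f_i(u_i)$ and its derivatives. (3) $\nabla^\ell R(X_1,X_2,X_3,X_4;Y_1,\dots,Y_{\ell-1},\partial_{s_i})=0$ for all tangent vectors $X_1,\dots,X_4,Y_1,\dots,Y_{\ell-1}$. (4) $\nabla^\ell R(X_1,X_2,X_3,X_4;Y_1,\dots,Y_{\ell-1},\partial_{u_0})=0$ for all tangent vectors $X_1,\dots,X_4,Y_1,\dots,Y_{\ell-1}$.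
   Context: Fix an integer $k\ge 1$ and signs $\varepsilon_1,\dots,\varepsilon_k\in\{\pm1\}$. Let $f_1,\dots,f_k:\mathbb R\to\mathbb R$ be smooth, $F=(f_1,\dots,f_k)$. On $\mathbb R^{3k+2}$ with coordinates $(u_0,\dots,u_k,v_0,\dots,v_k,s_1,\dots,s_k)$ let $g_F$ be the symmetric metric whose only nonzero components on coordinate vector fields are (up to symmetry), for $1\le i\le k$ and $0\le i',j\le k$: $g_F(\partial_{u_0},\partial_{u_i})=2f_i(u_i)s_i$, $g_F(\partial_{u_i},\partial_{u_i})=-2u_0s_i$, $g_F(\partial_{u_{i'}},\partial_{v_j})=\delta_{i'j}$, $g_F(\partial_{s_i},\partial_{s_i})=\varepsilon_i$; $\mathcal M_F=(\mathbb R^{3k+2},g_F)$. $\nabla$ is the Levi-Civita connection, $R(X,Y,Z,W)=g_F(\nabla_X\nabla_YZ-\nabla_Y\nabla_XZ-\nabla_{[X,Y]}Z,W)$, $\nabla^0R=R$, and $\nabla^\ell R(X_1,\dots,X_4;Y_1,\dots,Y_\ell)=(\nabla_{Y_\ell}\nabla^{\ell-1}R)(X_1,\dots,X_4;Y_1,\dots,Y_{\ell-1})$. *)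

theory Defs
  imports "HOL-Analysis.Analysis"
begin

text \<open>Points of the coordinate space R^n are represented as functions nat => real;
  only the components with index < n are coordinates. Tangent vectors at a point
  are likewise given by their components (nat => real) in the coordinate frame.
  A metric in coordinates is g a b x = g(partial_a, partial_b) at the point x.\<close>

definition pd :: "nat \<Rightarrow> ((nat \<Rightarrow> real) \<Rightarrow> real) \<Rightarrow> (nat \<Rightarrow> real) \<Rightarrow> real" where
  "pd c h x = deriv (\<lambda>t. h (x(c := t))) (x c)"

text \<open>Christoffel symbols of the first kind: g(nabla_a partial_b, partial_c).\<close>
definition christ1 :: "(nat \<Rightarrow> nat \<Rightarrow> (nat \<Rightarrow> real) \<Rightarrow> real) \<Rightarrow> nat \<Rightarrow> nat \<Rightarrow> nat \<Rightarrow> (nat \<Rightarrow> real) \<Rightarrow> real" where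
  "christ1 g a b c x = (pd a (g b c) x + pd b (g a c) x - pd c (g a b) x) / 2"

text \<open>Christoffel symbols of the second kind: christ2 n g a b x m is the m-th
  component of nabla_a partial_b at x (Levi-Civita connection), i.e. the unique
  solution of the linear system given by the first-kind symbols.\<close>
definition christ2 :: "nat \<Rightarrow> (nat \<Rightarrow> nat \<Rightarrow> (nat \<Rightarrow> real) \<Rightarrow> real) \<Rightarrow> nat \<Rightarrow> nat \<Rightarrow> (nat \<Rightarrow> real) \<Rightarrow> nat \<Rightarrow> real" where
  "christ2 n g a b x = (THE v. (\<forall>m. n \<le> m \<longrightarrow> v m = 0) \<and>
      (\<forall>c<n. (\<Sum>m<n. v m * g m c x) = christ1 g a b c x))"

text \<open>Coordinate vector field partial_c, and the covariant derivative nabla_a V of a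
  vector field V (given by its components V x p).\<close>
definition coord_field :: "nat \<Rightarrow> (nat \<Rightarrow> real) \<Rightarrow> nat \<Rightarrow> real" where
  "coord_field c = (\<lambda>x p. if p = c then 1 else 0)"

definition cov_vec :: "nat \<Rightarrow> (nat \<Rightarrow> nat \<Rightarrow> (nat \<Rightarrow> real) \<Rightarrow> real) \<Rightarrow> nat
    \<Rightarrow> ((nat \<Rightarrow> real) \<Rightarrow> nat \<Rightarrow> real) \<Rightarrow> (nat \<Rightarrow> real) \<Rightarrow> nat \<Rightarrow> real" where
  "cov_vec n g a V = (\<lambda>x p. pd a (\<lambda>y. V y p) x + (\<Sum>m<n. V x m * christ2 n g a m x p))"

text \<open>Riemann curvature tensor R(partial_a, partial_b, partial_c, partial_d)
  = g(nabla_a nabla_b partial_c - nabla_b nabla_a partial_c, partial_d)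
  (the bracket of coordinate fields vanishes).\<close>
definition riem :: "nat \<Rightarrow> (nat \<Rightarrow> nat \<Rightarrow> (nat \<Rightarrow> real) \<Rightarrow> real) \<Rightarrow> nat \<Rightarrow> nat \<Rightarrow> nat \<Rightarrow> nat
    \<Rightarrow> (nat \<Rightarrow> real) \<Rightarrow> real" where
  "riem n g a b c d x = (\<Sum>p<n. (cov_vec n g a (cov_vec n g b (coord_field c)) x p
        - cov_vec n g b (cov_vec n g a (coord_field c)) x p) * g p d x)"

text \<open>Covariant tensor fields are given by their components T x [a_1,...,a_r].
  The covariant derivative nabla T has one more slot, placed last:
  (nabla T)(...; c) = (nabla_c T)(...).\<close>
definition cov_tensor :: "nat \<Rightarrow> (nat \<Rightarrow> nat \<Rightarrow> (nat \<Rightarrow> real) \<Rightarrow> real)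
    \<Rightarrow> ((nat \<Rightarrow> real) \<Rightarrow> nat list \<Rightarrow> real) \<Rightarrow> (nat \<Rightarrow> real) \<Rightarrow> nat list \<Rightarrow> real" where
  "cov_tensor n g T = (\<lambda>x is. let c = last is; js = butlast is in
      pd c (\<lambda>y. T y js) x
      - (\<Sum>j<length js. \<Sum>m<n. christ2 n g c (js ! j) x m * T x (js[j := m])))"

definition nabla_R :: "nat \<Rightarrow> (nat \<Rightarrow> nat \<Rightarrow> (nat \<Rightarrow> real) \<Rightarrow> real) \<Rightarrow> nat
    \<Rightarrow> (nat \<Rightarrow> real) \<Rightarrow> nat list \<Rightarrow> real" where
  "nabla_R n g l = (cov_tensor n g ^^ l) (\<lambda>x is. riem n g (is ! 0) (is ! 1) (is ! 2) (is ! 3) x)"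

text \<open>Evaluation of a covariant tensor field at x on a list of tangent vectors
  (multilinear extension of the components).\<close>
definition tensor_apply :: "nat \<Rightarrow> ((nat \<Rightarrow> real) \<Rightarrow> nat list \<Rightarrow> real) \<Rightarrow> (nat \<Rightarrow> real)
    \<Rightarrow> (nat \<Rightarrow> real) list \<Rightarrow> real" where
  "tensor_apply n T x vs = (\<Sum>is\<in>{is. length is = length vs \<and> set is \<subseteq> {..<n}}.
      T x is * (\<Prod>j<length vs. (vs ! j) (is ! j)))"

text \<open>Coordinates on R^(3k+2): u_j has index j (0 \<le> j \<le> k), v_j has index k+1+j,
  s_i has index 2k+1+i (1 \<le> i \<le> k).\<close>
definition vidx :: "nat \<Rightarrow> nat \<Rightarrow> nat" where "vidx k j = k + 1 + j"
definition sidx :: "nat \<Rightarrow> nat \<Rightarrow> nat" where "sidx k i = 2 * k + 1 + i"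

text \<open>The metric g_F (f i and eps i are used for 1 \<le> i \<le> k).\<close>
definition gF :: "nat \<Rightarrow> (nat \<Rightarrow> real) \<Rightarrow> (nat \<Rightarrow> real \<Rightarrow> real) \<Rightarrow> nat \<Rightarrow> nat
    \<Rightarrow> (nat \<Rightarrow> real) \<Rightarrow> real" where
  "gF k eps f a b x =
     (if a = 0 \<and> 1 \<le> b \<and> b \<le> k then 2 * f b (x b) * x (sidx k b)
      else if b = 0 \<and> 1 \<le> a \<and> a \<le> k then 2 * f a (x a) * x (sidx k a)
      else if a = b \<and> 1 \<le> a \<and> a \<le> k then - 2 * x 0 * x (sidx k a)
      else if a \<le> k \<and> b = vidx k a then 1
      else if b \<le> k \<and> a = vidx k b then 1
      else if a = b \<and> sidx k 1 \<le> a \<and> a \<le> sidx k k then eps (a - (2 * k + 1))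
      else 0)"

definition cvec :: "nat \<Rightarrow> nat \<Rightarrow> real" where
  "cvec a = (\<lambda>p. if p = a then 1 else 0)"

text \<open>Value of a real polynomial in variables y_0..y_N, given as a finite set E of
  exponent vectors with coefficients c.\<close>
definition jet_poly :: "nat \<Rightarrow> (nat \<Rightarrow> nat) set \<Rightarrow> ((nat \<Rightarrow> nat) \<Rightarrow> real) \<Rightarrow> (nat \<Rightarrow> real) \<Rightarrow> real" where
  "jet_poly N E c y = (\<Sum>e\<in>E. c e * (\<Prod>j\<le>N. y j ^ e j))"

end

theory Submission imports Defs begin

datatype loc = LZ | LI | LS

fun sg1 :: "loc \<Rightarrow> loc \<Rightarrow> real" where
  "sg1 LZ LI = 1" | "sg1 LI LZ = -1" | "sg1 _ _ = 0"
fun sg2 :: "loc \<Rightarrow> loc \<Rightarrow> real" where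
  "sg2 LI LS = 1" | "sg2 LS LI = -1" | "sg2 _ _ = 0"

definition Rtab :: "real \<Rightarrow> real \<Rightarrow> real \<Rightarrow> loc \<Rightarrow> loc \<Rightarrow> loc \<Rightarrow> loc \<Rightarrow> real" where
  "Rtab e u v la lb lc ld = e * u * u * (sg1 la lb * sg1 ld lc) + (1 + v) * (sg1 la lb * sg2 lc ld + sg2 la lb * sg1 lc ld)"

lemma Rtab_A: "(if la = LI then Rtab e u v LS lb lc ld else 0) + (if lb = LI then Rtab e u v la LS lc ld else 0)
  + (if lc = LI then Rtab e u v la lb LS ld else 0) + (if ld = LI then Rtab e u v la lb lc LS else 0) = 0"
  by (cases la; cases lb; cases lc; cases ld) (simp_all add: Rtab_def)

lemma Rtab_SS: "length (filter (\<lambda>l. l = LS) [la, lb, lc, ld]) \<ge> 2 \<Longrightarrow> Rtab e u v la lb lc ld = 0"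
  by (cases la; cases lb; cases lc; cases ld) (simp_all add: Rtab_def)

locale MF =
  fixes k :: nat and eps :: "nat \<Rightarrow> real" and f :: "nat \<Rightarrow> real \<Rightarrow> real"
  assumes k1: "k \<ge> 1"
    and epsv: "\<forall>i\<in>{1..k}. eps i = 1 \<or> eps i = -1"
    and smooth: "\<forall>i\<in>{1..k}. \<forall>m t. (deriv ^^ m) (f i) differentiable (at t)"
begin

abbreviation "F i m \<equiv> (deriv ^^ m) (f i)"
abbreviation "s i \<equiv> sidx k i"

lemma eps_sq: "1 \<le> i \<Longrightarrow> i \<le> k \<Longrightarrow> eps i * eps i = 1"
  using epsv by force

lemma DF: "1 \<le> i \<Longrightarrow> i \<le> k \<Longrightarrow> (F i m has_real_derivative F i (Suc m) t) (at t)"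
  using smooth DERIV_deriv_iff_real_differentiable by force

lemma DF0: "1 \<le> i \<Longrightarrow> i \<le> k \<Longrightarrow> (f i has_real_derivative F i 1 t) (at t)"
  using DF[of i 0 t] by simp

definition P0 where "P0 e i x = (if e = i then 2 * F i 1 (x i) * x (s i) else if e = s i then 2 * f i (x i) else 0)"
definition Q0 where "Q0 e i x = (if e = 0 then -2 * x (s i) else if e = s i then -2 * x 0 else (0::real))"
definition dgi where "dgi i e a b x = (if a = 0 \<and> b = i then P0 e i x else if b = 0 \<and> a = i then P0 e i x
   else if a = b \<and> a = i then Q0 e i x else 0)"
definition P1 where "P1 e' e i x = (if e = i then (if e' = i then 2 * F i 2 (x i) * x (s i) else if e' = s i then 2 * F i 1 (x i) else 0)
   else if e = s i then (if e' = i then 2 * F i 1 (x i) else 0) else 0)"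
definition Q1 where "Q1 e' e i x = (if e = 0 then (if e' = s i then -2 else 0) else if e = s i then (if e' = 0 then -2 else 0) else (0::real))"
definition ddgi where "ddgi i e' e a b x = (if a = 0 \<and> b = i then P1 e' e i x else if b = 0 \<and> a = i then P1 e' e i x
   else if a = b \<and> a = i then Q1 e' e i x else 0)"

lemma sidx_simps[simp]: "s i \<noteq> 0" "1 \<le> i \<Longrightarrow> i \<le> k \<Longrightarrow> s i \<noteq> i" "1 \<le> i \<Longrightarrow> i \<le> k \<Longrightarrow> i \<noteq> s i"
  "s i = s j \<longleftrightarrow> i = j"
  by (auto simp: sidx_def)

lemma DP0: assumes "1 \<le> i" "i \<le> k"
  shows "((\<lambda>t. P0 e i (x(e':=t))) has_real_derivative P1 e' e i x) (at (x e'))"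
proof -
  have [simp]: "F i 2 = deriv (F i 1)" by (simp add: numeral_2_eq_2)
  show ?thesis using assms DF[OF assms, of 1] DF0[OF assms]
  by (cases "e = i"; cases "e = s i"; cases "e' = i"; cases "e' = s i")
     (auto simp: P0_def P1_def intro!: derivative_eq_intros)
qed

lemma DQ0: assumes "1 \<le> i" "i \<le> k"
  shows "((\<lambda>t. Q0 e i (x(e':=t))) has_real_derivative Q1 e' e i x) (at (x e'))"
  using assms
  by (cases "e = 0"; cases "e = s i"; cases "e' = 0"; cases "e' = s i")
     (auto simp: Q0_def Q1_def intro!: derivative_eq_intros)

lemma Ddgi: assumes "1 \<le> i" "i \<le> k"
  shows "((\<lambda>t. dgi i e a b (x(e':=t))) has_real_derivative ddgi i e' e a b x) (at (x e'))"
proof -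
  consider "a = 0 \<and> b = i \<or> b = 0 \<and> a = i" | "\<not>(a = 0 \<and> b = i \<or> b = 0 \<and> a = i)" "a = b \<and> a = i"
    | "\<not>(a = 0 \<and> b = i \<or> b = 0 \<and> a = i)" "\<not>(a = b \<and> a = i)" by blast
  then show ?thesis
  proof cases
    case 1
    then have "(\<lambda>t. dgi i e a b (x(e':=t))) = (\<lambda>t. P0 e i (x(e':=t)))" "ddgi i e' e a b x = P1 e' e i x"
      by (auto simp: dgi_def ddgi_def)
    then show ?thesis using DP0[OF assms] by simp
  next
    case 2
    then have "(\<lambda>t. dgi i e a b (x(e':=t))) = (\<lambda>t. Q0 e i (x(e':=t)))" "ddgi i e' e a b x = Q1 e' e i x"
      by (auto simp: dgi_def ddgi_def)
    then show ?thesis using DQ0[OF assms] by simp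
  next
    case 3
    then have "(\<lambda>t. dgi i e a b (x(e':=t))) = (\<lambda>t. 0)" "ddgi i e' e a b x = 0"
      by (auto simp: dgi_def ddgi_def)
    then show ?thesis by simp
  qed
qed


lemma sum_single: "finite A \<Longrightarrow> j \<in> A \<Longrightarrow> (\<And>i. i \<in> A \<Longrightarrow> i \<noteq> j \<Longrightarrow> h i = 0) \<Longrightarrow> sum h A = (h j :: real)"
  by (simp add: sum.remove sum.neutral)

lemma pd_D: "((\<lambda>t. h (x(e:=t))) has_real_derivative D) (at (x e)) \<Longrightarrow> pd e h x = D"
  by (simp add: pd_def DERIV_imp_deriv)

definition g0 where "g0 i x = 2 * f i (x i) * x (s i)"
definition h0 where "h0 i x = -2 * x 0 * x (s (i::nat))"

lemma Dg0: assumes "1 \<le> i" "i \<le> k"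
  shows "((\<lambda>t. g0 i (x(e:=t))) has_real_derivative P0 e i x) (at (x e))"
  using assms DF0[OF assms]
  by (cases "e = i"; cases "e = s i")
     (auto simp: P0_def g0_def intro!: derivative_eq_intros)

lemma Dh0: assumes "1 \<le> i" "i \<le> k"
  shows "((\<lambda>t. h0 i (x(e:=t))) has_real_derivative Q0 e i x) (at (x e))"
  using assms
  by (cases "e = 0"; cases "e = s i")
     (auto simp: Q0_def h0_def intro!: derivative_eq_intros)

lemma dgi_0b: "1 \<le> b \<Longrightarrow> b \<le> k \<Longrightarrow> (\<Sum>i\<in>{1..k}. dgi i e 0 b x) = P0 e b x"
  by (subst sum_single[where j=b]) (auto simp: dgi_def)
lemma dgi_a0: "1 \<le> a \<Longrightarrow> a \<le> k \<Longrightarrow> (\<Sum>i\<in>{1..k}. dgi i e a 0 x) = P0 e a x"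
  by (subst sum_single[where j=a]) (auto simp: dgi_def)
lemma dgi_aa: "1 \<le> a \<Longrightarrow> a \<le> k \<Longrightarrow> (\<Sum>i\<in>{1..k}. dgi i e a a x) = Q0 e a x"
  by (subst sum_single[where j=a]) (auto simp: dgi_def)
lemma dgi_other: "\<not> (a = 0 \<and> 1 \<le> b \<and> b \<le> k) \<Longrightarrow> \<not> (b = 0 \<and> 1 \<le> a \<and> a \<le> k) \<Longrightarrow> \<not> (a = b \<and> 1 \<le> a \<and> a \<le> k)
   \<Longrightarrow> (\<Sum>i\<in>{1..k}. dgi i e a b x) = 0"
  by (rule sum.neutral) (auto simp: dgi_def)

lemma DgF: "((\<lambda>t. gF k eps f a b (x(e:=t))) has_real_derivative (\<Sum>i\<in>{1..k}. dgi i e a b x)) (at (x e))"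
proof -
  consider "a = 0 \<and> 1 \<le> b \<and> b \<le> k" | "\<not>(a = 0 \<and> 1 \<le> b \<and> b \<le> k)" "b = 0 \<and> 1 \<le> a \<and> a \<le> k"
    | "\<not>(a = 0 \<and> 1 \<le> b \<and> b \<le> k)" "\<not>(b = 0 \<and> 1 \<le> a \<and> a \<le> k)" "a = b \<and> 1 \<le> a \<and> a \<le> k"
    | "\<not>(a = 0 \<and> 1 \<le> b \<and> b \<le> k)" "\<not>(b = 0 \<and> 1 \<le> a \<and> a \<le> k)" "\<not>(a = b \<and> 1 \<le> a \<and> a \<le> k)"
    by blast
  then show ?thesis
  proof cases
    case 1
    then have "(\<lambda>t. gF k eps f a b (x(e:=t))) = (\<lambda>t. g0 b (x(e:=t)))" by (auto simp: gF_def g0_def)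
    then show ?thesis using 1 Dg0[of b] dgi_0b[of b] by simp
  next
    case 2
    then have "(\<lambda>t. gF k eps f a b (x(e:=t))) = (\<lambda>t. g0 a (x(e:=t)))" by (auto simp: gF_def g0_def)
    then show ?thesis using 2 Dg0[of a] dgi_a0[of a] by simp
  next
    case 3
    then have "(\<lambda>t. gF k eps f a b (x(e:=t))) = (\<lambda>t. h0 a (x(e:=t)))" by (auto simp: gF_def h0_def)
    then show ?thesis using 3 Dh0[of a] dgi_aa[of a] by auto
  next
    case 4
    then have "gF k eps f a b y = gF k eps f a b x" for y unfolding gF_def by (simp only: if_False)
    then have "(\<lambda>t. gF k eps f a b (x(e:=t))) = (\<lambda>t. gF k eps f a b x)" by (intro ext) blast
    then show ?thesis using 4 dgi_other[of a b] by simp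
  qed
qed

lemma pd_gF: "pd e (gF k eps f a b) x = (\<Sum>i\<in>{1..k}. dgi i e a b x)"
  by (rule pd_D[OF DgF])

definition Ci where "Ci i a b c x = (dgi i a b c x + dgi i b a c x - dgi i c a b x) / 2"
definition dCi where "dCi i e a b c x = (ddgi i e a b c x + ddgi i e b a c x - ddgi i e c a b x) / 2"

lemma christ1_eq: "christ1 (gF k eps f) a b c x = (\<Sum>i\<in>{1..k}. Ci i a b c x)"
  by (simp add: christ1_def pd_gF Ci_def sum_divide_distrib[symmetric] sum_subtractf sum.distrib)

lemma Dchrist1: "((\<lambda>t. christ1 (gF k eps f) a b c (x(e:=t))) has_real_derivative (\<Sum>i\<in>{1..k}. dCi i e a b c x)) (at (x e))"
proof -
  have "((\<lambda>t. Ci i a b c (x(e:=t))) has_real_derivative dCi i e a b c x) (at (x e))" if "i \<in> {1..k}" for i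
    unfolding Ci_def dCi_def using that by (auto intro!: derivative_eq_intros Ddgi)
  then show ?thesis unfolding christ1_eq by (rule DERIV_sum)
qed


definition "nn = 3*k+2"
abbreviation "gg \<equiv> gF k eps f"
definition "blk i = {0, i, s i}"

lemma s_less[simp]: "i \<le> k \<Longrightarrow> s i < nn" by (auto simp: sidx_def nn_def)
lemma s_not_le[simp]: "\<not> s i \<le> k" by (simp add: sidx_def)
lemma s_gt[simp]: "k < s i" "1 \<le> i \<Longrightarrow> 2*k+1 < s i" by (auto simp: sidx_def)

lemma gcol_V: "k+1 \<le> c \<Longrightarrow> c \<le> 2*k+1 \<Longrightarrow> gF k eps f m c x = (if m = c - (k+1) then 1 else 0)"
  by (auto simp: gF_def vidx_def sidx_def)
lemma gcol_S: "1 \<le> i \<Longrightarrow> i \<le> k \<Longrightarrow> gF k eps f m (s i) x = (if m = s i then eps i else 0)"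
  by (auto simp: gF_def vidx_def sidx_def)
lemma gcol_U: "c \<le> k \<Longrightarrow> k < m \<Longrightarrow> gF k eps f m c x = (if m = vidx k c then 1 else 0)"
  by (auto simp: gF_def vidx_def sidx_def)

lemma dgi_out: "1 \<le> i \<Longrightarrow> i \<le> k \<Longrightarrow> e \<notin> blk i \<or> a \<notin> blk i \<or> b \<notin> blk i \<Longrightarrow> dgi i e a b x = 0"
  by (auto simp: dgi_def P0_def Q0_def blk_def)
lemma ddgi_out: "1 \<le> i \<Longrightarrow> i \<le> k \<Longrightarrow> e' \<notin> blk i \<or> e \<notin> blk i \<or> a \<notin> blk i \<or> b \<notin> blk i \<Longrightarrow> ddgi i e' e a b x = 0"
  by (auto simp: ddgi_def P1_def Q1_def blk_def)
lemma Ci_out: "1 \<le> i \<Longrightarrow> i \<le> k \<Longrightarrow> a \<notin> blk i \<or> b \<notin> blk i \<or> c \<notin> blk i \<Longrightarrow> Ci i a b c x = 0"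
  unfolding Ci_def by (metis dgi_out diff_self add.commute add_0 div_0)
lemma dCi_out: "1 \<le> i \<Longrightarrow> i \<le> k \<Longrightarrow> e \<notin> blk i \<or> a \<notin> blk i \<or> b \<notin> blk i \<or> c \<notin> blk i \<Longrightarrow> dCi i e a b c x = 0"
  unfolding dCi_def using ddgi_out[of i] by auto

lemma V_notin_blk: "1 \<le> i \<Longrightarrow> i \<le> k \<Longrightarrow> k < m \<Longrightarrow> m \<le> 2*k+1 \<Longrightarrow> m \<notin> blk i"
  by (auto simp: blk_def sidx_def)
lemma big_notin_blk: "1 \<le> i \<Longrightarrow> i \<le> k \<Longrightarrow> 3*k+2 \<le> m \<Longrightarrow> m \<notin> blk i"
  by (auto simp: blk_def sidx_def)

lemma christ1_V: "k < c \<Longrightarrow> c \<le> 2*k+1 \<Longrightarrow> christ1 gg a b c x = 0"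
  unfolding christ1_eq by (rule sum.neutral) (auto intro!: Ci_out simp: V_notin_blk)
lemma christ1_Va: "k < a \<Longrightarrow> a \<le> 2*k+1 \<Longrightarrow> christ1 gg a b c x = 0"
  unfolding christ1_eq by (rule sum.neutral) (auto intro!: Ci_out simp: V_notin_blk)
lemma christ1_Vb: "k < b \<Longrightarrow> b \<le> 2*k+1 \<Longrightarrow> christ1 gg a b c x = 0"
  unfolding christ1_eq by (rule sum.neutral) (auto intro!: Ci_out simp: V_notin_blk)

definition sol where "sol a b x m = (if k < m \<and> m \<le> 2*k+1 then christ1 gg a b (m-(k+1)) x
   else if 2*k+2 \<le> m \<and> m \<le> 3*k+1 then eps (m - (2*k+1)) * christ1 gg a b m x else 0)"

lemma S_cases: "2*k+2 \<le> m \<Longrightarrow> m \<le> 3*k+1 \<Longrightarrow> \<exists>i. 1 \<le> i \<and> i \<le> k \<and> m = s i"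
  by (rule exI[of _ "m - (2*k+1)"]) (auto simp: sidx_def)

lemma sol_eqn: assumes c: "c < nn" shows "(\<Sum>m<nn. sol a b x m * gg m c x) = christ1 gg a b c x"
proof -
  consider "c \<le> k" | "k < c \<and> c \<le> 2*k+1" | "2*k+2 \<le> c \<and> c \<le> 3*k+1" using c unfolding nn_def by linarith
  then show ?thesis
  proof cases
    case 1
    have "(\<Sum>m<nn. sol a b x m * gg m c x) = sol a b x (vidx k c) * gg (vidx k c) c x"
      by (rule sum_single) (use 1 in \<open>auto simp: sol_def gcol_U vidx_def nn_def\<close>)
    also have "\<dots> = christ1 gg a b c x" using 1 by (simp add: sol_def gcol_U vidx_def)
    finally show ?thesis .
  next
    case 2
    have "(\<Sum>m<nn. sol a b x m * gg m c x) = 0"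
      by (rule sum.neutral) (use 2 in \<open>auto simp: sol_def gcol_V\<close>)
    then show ?thesis using 2 christ1_V by simp
  next
    case 3
    then obtain i where i: "1 \<le> i" "i \<le> k" "c = s i" using S_cases by blast
    have "(\<Sum>m<nn. sol a b x m * gg m c x) = sol a b x c * gg c c x"
      by (rule sum_single) (use i in \<open>auto simp: gcol_S\<close>)
    also have "\<dots> = christ1 gg a b c x"
    proof -
      have "sol a b x (s i) = eps i * christ1 gg a b (s i) x" using i by (simp add: sol_def sidx_def)
      moreover have "gg (s i) (s i) x = eps i" using i by (simp add: gcol_S)
      ultimately show ?thesis using i eps_sq[of i] by (simp add: algebra_simps)
    qed
    finally show ?thesis .
  qed
qed

lemma christ2_eq: "christ2 nn gg a b x = sol a b x"
  unfolding christ2_def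
proof (rule the_equality)
  show "(\<forall>m. nn \<le> m \<longrightarrow> sol a b x m = 0) \<and> (\<forall>c<nn. (\<Sum>m<nn. sol a b x m * gg m c x) = christ1 gg a b c x)"
    using sol_eqn by (auto simp: sol_def nn_def)
next
  fix v assume v: "(\<forall>m. nn \<le> m \<longrightarrow> v m = 0) \<and> (\<forall>c<nn. (\<Sum>m<nn. v m * gg m c x) = christ1 gg a b c x)"
  have vU: "v j = 0" if "j \<le> k" for j
  proof -
    have "(\<Sum>m<nn. v m * gg m (vidx k j) x) = v j"
      by (subst sum_single[where j=j]) (use that in \<open>auto simp: gcol_V vidx_def nn_def\<close>)
    moreover have "(\<Sum>m<nn. v m * gg m (vidx k j) x) = christ1 gg a b (vidx k j) x"
      using v that by (auto simp: vidx_def nn_def)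
    ultimately show ?thesis using christ1_V[of "vidx k j"] that by (simp add: vidx_def)
  qed
  have vS: "v (s i) = eps i * christ1 gg a b (s i) x" if "1 \<le> i" "i \<le> k" for i
  proof -
    have "(\<Sum>m<nn. v m * gg m (s i) x) = v (s i) * eps i"
      by (subst sum_single[where j="s i"]) (use that in \<open>auto simp: gcol_S\<close>)
    moreover have "(\<Sum>m<nn. v m * gg m (s i) x) = christ1 gg a b (s i) x"
      using v that by auto
    ultimately have h: "v (s i) * eps i = christ1 gg a b (s i) x" by simp
    have "v (s i) = v (s i) * (eps i * eps i)" using eps_sq[OF that] by simp
    also have "\<dots> = (v (s i) * eps i) * eps i" by (simp add: mult.assoc)
    also have "\<dots> = eps i * christ1 gg a b (s i) x" using h by simp
    finally show ?thesis .
  qed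
  have vV: "v (vidx k j) = christ1 gg a b j x" if "j \<le> k" for j
  proof -
    have "(\<Sum>m<nn. v m * gg m j x) = v (vidx k j)"
    proof (subst sum_single[where j="vidx k j"])
      show "v m * gg m j x = 0" if "m \<noteq> vidx k j" for m
        using vU[of m] gcol_U[of j m x] that \<open>j \<le> k\<close> by (cases "m \<le> k") auto
    qed (use that in \<open>auto simp: gcol_U vidx_def nn_def\<close>)
    moreover have "(\<Sum>m<nn. v m * gg m j x) = christ1 gg a b j x"
      using v that by (auto simp: nn_def)
    ultimately show ?thesis by simp
  qed
  show "v = sol a b x"
  proof
    fix m
    consider "m \<le> k" | "k < m \<and> m \<le> 2*k+1" | "2*k+2 \<le> m \<and> m \<le> 3*k+1" | "nn \<le> m" unfolding nn_def by linarith
    then show "v m = sol a b x m"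
    proof cases
      case 1 then show ?thesis using vU by (simp add: sol_def)
    next
      case 2
      have "v m = christ1 gg a b (m - (k+1)) x" 
      proof -
        have "m - (k+1) \<le> k" "vidx k (m - (k+1)) = m" using 2 by (auto simp: vidx_def)
        then show ?thesis using vV[of "m-(k+1)"] by simp
      qed
      then show ?thesis using 2 by (simp add: sol_def)
    next
      case 3
      then obtain i where i: "1 \<le> i" "i \<le> k" "m = s i" using S_cases by blast
      then show ?thesis using vS[OF i(1,2)] by (simp add: sol_def sidx_def)
    next
      case 4 then show ?thesis using v by (simp add: sol_def nn_def)
    qed
  qed
qed


lemma sol_U: "m \<le> k \<Longrightarrow> sol a b x m = 0" by (simp add: sol_def)
lemma sol_V: "d \<le> k \<Longrightarrow> sol a b x (vidx k d) = christ1 gg a b d x" by (simp add: sol_def vidx_def)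
lemma sol_S: "1 \<le> j \<Longrightarrow> j \<le> k \<Longrightarrow> sol a b x (s j) = eps j * christ1 gg a b (s j) x" by (simp add: sol_def sidx_def)
lemma sol_big: "nn \<le> m \<Longrightarrow> sol a b x m = 0" by (simp add: sol_def nn_def)

lemma pd_const[simp]: "pd e (\<lambda>y. c) x = 0" by (simp add: pd_def)

lemma pd_sol_U: "p \<le> k \<Longrightarrow> pd a (\<lambda>y. sol b c y p) x = 0" by (simp add: sol_U pd_def)
lemma pd_christ1: "pd a (\<lambda>y. christ1 gg b c d y) x = (\<Sum>i\<in>{1..k}. dCi i a b c d x)"
  by (rule pd_D[OF Dchrist1])
lemma pd_sol_V: "d \<le> k \<Longrightarrow> pd a (\<lambda>y. sol b c y (vidx k d)) x = (\<Sum>i\<in>{1..k}. dCi i a b c d x)"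
  by (simp add: sol_V pd_christ1)
lemma pd_sol_S: "1 \<le> j \<Longrightarrow> j \<le> k \<Longrightarrow> pd a (\<lambda>y. sol b c y (s j)) x = eps j * (\<Sum>i\<in>{1..k}. dCi i a b c (s j) x)"
proof -
  assume j: "1 \<le> j" "j \<le> k"
  have "((\<lambda>t. eps j * christ1 gg b c (s j) (x(a:=t))) has_real_derivative eps j * (\<Sum>i\<in>{1..k}. dCi i a b c (s j) x)) (at (x a))"
    by (rule DERIV_cmult[OF Dchrist1])
  then show ?thesis using j by (simp add: sol_S pd_D)
qed

lemma dgi_pair: "(a \<noteq> 0 \<and> a \<noteq> i) \<or> (b \<noteq> 0 \<and> b \<noteq> i) \<Longrightarrow> dgi i e a b x = 0"
  by (auto simp: dgi_def)

lemma s_notin_blk: "1 \<le> i' \<Longrightarrow> i' \<le> k \<Longrightarrow> i' \<noteq> i \<Longrightarrow> s i \<notin> blk i'"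
  by (auto simp: blk_def sidx_def)

lemma christ1_s3: "1 \<le> i \<Longrightarrow> i \<le> k \<Longrightarrow> christ1 gg a b (s i) x = Ci i a b (s i) x"
  unfolding christ1_eq by (rule sum_single) (auto intro!: Ci_out simp: s_notin_blk)
lemma christ1_s2: "1 \<le> i \<Longrightarrow> i \<le> k \<Longrightarrow> christ1 gg a (s i) d x = Ci i a (s i) d x"
  unfolding christ1_eq by (rule sum_single) (auto intro!: Ci_out simp: s_notin_blk)

lemma christ1_SS: "1 \<le> i \<Longrightarrow> i \<le> k \<Longrightarrow> 1 \<le> j \<Longrightarrow> j \<le> k \<Longrightarrow> christ1 gg a (s i) (s j) x = 0"
  unfolding christ1_eq Ci_def
  by (rule sum.neutral) (auto simp: dgi_pair sidx_def)

lemma sum_S: assumes "\<And>m. m < nn \<Longrightarrow> m \<notin> s ` {1..k} \<Longrightarrow> h m = 0"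
  shows "(\<Sum>m<nn. h m) = (\<Sum>i\<in>{1..k}. h (s i))"
proof -
  have "(\<Sum>m<nn. h m) = (\<Sum>m\<in>s ` {1..k}. h m)"
    by (rule sum.mono_neutral_right) (use assms in \<open>auto\<close>)
  also have "\<dots> = (\<Sum>i\<in>{1..k}. h (s i))"
    by (rule sum.reindex_cong[where l=s]) (auto simp: inj_on_def)
  finally show ?thesis .
qed

definition Ri where "Ri i a b c d x = dCi i a b c d x - dCi i b a c d x +
   (if d \<le> k then eps i * (Ci i b c (s i) x * Ci i a (s i) d x - Ci i a c (s i) x * Ci i b (s i) d x) else 0)"

definition Yv where "Yv a b c x p = pd a (\<lambda>y. sol b c y p) x + (\<Sum>m<nn. sol b c x m * sol a m x p)"

lemma delta_mult[simp]: "(if m = c then 1 else 0) * (h::real) = (if m = c then h else 0)" by simp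
lemma vidx_gt[simp]: "k < vidx k d" by (simp add: vidx_def)

lemma cov_coord: "c < nn \<Longrightarrow> cov_vec nn gg b (coord_field c) = (\<lambda>x p. sol b c x p)"
  by (auto simp: cov_vec_def coord_field_def pd_const christ2_eq intro!: ext)

lemma riem_Y: assumes "c < nn" shows "riem nn gg a b c d x = (\<Sum>p<nn. (Yv a b c x p - Yv b a c x p) * gg p d x)"
  unfolding riem_def cov_coord[OF assms] by (simp add: cov_vec_def Yv_def christ2_eq)

lemma Yv_U: "p \<le> k \<Longrightarrow> Yv a b c x p = 0"
  by (simp add: Yv_def pd_sol_U sol_U)

lemma Yv_V: assumes "d \<le> k"
  shows "Yv a b c x (vidx k d) = (\<Sum>i\<in>{1..k}. dCi i a b c d x) + (\<Sum>i\<in>{1..k}. eps i * Ci i b c (s i) x * Ci i a (s i) d x)"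
proof -
  have "(\<Sum>m<nn. sol b c x m * sol a m x (vidx k d)) = (\<Sum>m<nn. sol b c x m * christ1 gg a m d x)"
    using assms by (simp add: sol_V)
  also have "\<dots> = (\<Sum>i\<in>{1..k}. sol b c x (s i) * christ1 gg a (s i) d x)"
  proof (rule sum_S)
    fix m assume m: "m < nn" "m \<notin> s ` {1..k}"
    consider "m \<le> k" | "k < m \<and> m \<le> 2*k+1" | "2*k+2 \<le> m \<and> m \<le> 3*k+1" using m unfolding nn_def by linarith
    then show "sol b c x m * christ1 gg a m d x = 0"
    proof cases
      case 1 then show ?thesis by (simp add: sol_U)
    next
      case 2 then show ?thesis by (simp add: christ1_Vb)
    next
      case 3
      then obtain i where "1 \<le> i" "i \<le> k" "m = s i" using S_cases by blast
      then have "m \<in> s ` {1..k}" by auto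
      with m show ?thesis by blast
    qed
  qed
  also have "\<dots> = (\<Sum>i\<in>{1..k}. eps i * Ci i b c (s i) x * Ci i a (s i) d x)"
    by (rule sum.cong) (auto simp: sol_S christ1_s3 christ1_s2)
  finally show ?thesis using assms by (simp add: Yv_def pd_sol_V)
qed

lemma Yv_S: assumes "1 \<le> j" "j \<le> k"
  shows "Yv a b c x (s j) = eps j * (\<Sum>i\<in>{1..k}. dCi i a b c (s j) x)"
proof -
  have "(\<Sum>m<nn. sol b c x m * sol a m x (s j)) = 0"
  proof (rule sum.neutral, intro ballI)
    fix m assume m: "m \<in> {..<nn}"
    consider "m \<le> k" | "k < m \<and> m \<le> 2*k+1" | "2*k+2 \<le> m \<and> m \<le> 3*k+1" using m unfolding nn_def by fastforce
    then show "sol b c x m * sol a m x (s j) = 0"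
    proof cases
      case 1 then show ?thesis by (simp add: sol_U)
    next
      case 2 then show ?thesis using assms by (simp add: sol_S christ1_Vb)
    next
      case 3
      then obtain i where "1 \<le> i" "i \<le> k" "m = s i" using S_cases by blast
      then show ?thesis using assms by (simp add: sol_S christ1_SS)
    qed
  qed
  then show ?thesis using assms by (simp add: Yv_def pd_sol_S)
qed

lemma riem_eq: assumes "a < nn" "b < nn" "c < nn" "d < nn"
  shows "riem nn gg a b c d x = (\<Sum>i\<in>{1..k}. Ri i a b c d x)"
proof -
  consider "d \<le> k" | "k < d \<and> d \<le> 2*k+1" | "2*k+2 \<le> d \<and> d \<le> 3*k+1" using assms unfolding nn_def by linarith
  then show ?thesis
  proof cases
    case 1
    have "riem nn gg a b c d x = (Yv a b c x (vidx k d) - Yv b a c x (vidx k d)) * gg (vidx k d) d x"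
      unfolding riem_Y[OF assms(3)]
    proof (rule sum_single)
      fix p assume "p \<in> {..<nn}" "p \<noteq> vidx k d"
      then show "(Yv a b c x p - Yv b a c x p) * gg p d x = 0"
        using 1 by (cases "p \<le> k") (auto simp: Yv_U gcol_U)
    qed (use 1 in \<open>auto simp: vidx_def nn_def\<close>)
    also have "\<dots> = (\<Sum>i\<in>{1..k}. Ri i a b c d x)"
      using 1 by (simp add: Yv_V gcol_U Ri_def sum.distrib sum_subtractf sum_distrib_left algebra_simps)
    finally show ?thesis .
  next
    case 2
    have "riem nn gg a b c d x = (Yv a b c x (d - (k+1)) - Yv b a c x (d - (k+1))) * gg (d - (k+1)) d x"
      unfolding riem_Y[OF assms(3)]
      by (rule sum_single) (use 2 in \<open>auto simp: gcol_V nn_def\<close>)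
    also have "\<dots> = 0"
    proof -
      have "d - (k+1) \<le> k" using 2 by linarith
      then show ?thesis by (simp add: Yv_U)
    qed
    also have "\<dots> = (\<Sum>i\<in>{1..k}. Ri i a b c d x)"
      by (rule sum.neutral[symmetric]) (use 2 in \<open>auto simp: Ri_def dCi_out V_notin_blk\<close>)
    finally show ?thesis .
  next
    case 3
    then obtain j where j: "1 \<le> j" "j \<le> k" "d = s j" using S_cases by blast
    have "riem nn gg a b c d x = (Yv a b c x d - Yv b a c x d) * gg d d x"
      unfolding riem_Y[OF assms(3)]
      by (rule sum_single) (use j in \<open>auto simp: gcol_S\<close>)
    also have "\<dots> = (\<Sum>i\<in>{1..k}. Ri i a b c d x)"
    proof -
      have R: "(\<Sum>i\<in>{1..k}. Ri i a b c d x) = (\<Sum>i\<in>{1..k}. dCi i a b c d x) - (\<Sum>i\<in>{1..k}. dCi i b a c d x)"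
      proof -
        have "Ri i a b c (s j) x = dCi i a b c (s j) x - dCi i b a c (s j) x" for i
          unfolding Ri_def by (simp only: s_not_le if_False add_0_right)
        then show ?thesis unfolding j(3) by (simp only: sum_subtractf)
      qed
      have e: "(eps j * A - eps j * B) * eps j = A - B" for A B
      proof -
        have "(eps j * A - eps j * B) * eps j = (eps j * eps j) * (A - B)" by (simp add: algebra_simps)
        then show ?thesis using eps_sq[OF j(1,2)] by simp
      qed
      have y1: "Yv a b c x (s j) = eps j * (\<Sum>i\<in>{1..k}. dCi i a b c (s j) x)" using j(1,2) by (rule Yv_S)
      have y2: "Yv b a c x (s j) = eps j * (\<Sum>i\<in>{1..k}. dCi i b a c (s j) x)" using j(1,2) by (rule Yv_S)
      have y3: "gg (s j) (s j) x = eps j" using j by (simp add: gcol_S)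
      show ?thesis unfolding j(3) y1 y2 y3 e R[unfolded j(3)] ..
    qed
    finally show ?thesis .
  qed
qed


definition emb where "emb i l = (case l of LZ \<Rightarrow> 0 | LI \<Rightarrow> i | LS \<Rightarrow> s i)"
definition loc where "loc i a = (if a = 0 then LZ else if a = i then LI else LS)"

lemma Ri_tab: "1 \<le> i \<Longrightarrow> i \<le> k \<Longrightarrow> Ri i (emb i la) (emb i lb) (emb i lc) (emb i ld) x
   = Rtab (eps i) (f i (x i)) (deriv (f i) (x i)) la lb lc ld"
  apply (cases la; cases lb; cases lc; cases ld)
  apply (simp_all add: emb_def Rtab_def Ri_def dCi_def ddgi_def Ci_def dgi_def P0_def Q0_def P1_def Q1_def)
  apply (simp_all add: field_simps)
  done

lemma emb_loc: "1 \<le> i \<Longrightarrow> i \<le> k \<Longrightarrow> a \<in> blk i \<Longrightarrow> emb i (loc i a) = a"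
  by (auto simp: emb_def loc_def blk_def)

lemma Ri_out: "1 \<le> i \<Longrightarrow> i \<le> k \<Longrightarrow> \<not> (a \<in> blk i \<and> b \<in> blk i \<and> c \<in> blk i \<and> d \<in> blk i) \<Longrightarrow> Ri i a b c d x = 0"
  unfolding Ri_def using dCi_out[of i] Ci_out[of i] by auto

lemma RiE: "1 \<le> i \<Longrightarrow> i \<le> k \<Longrightarrow> Ri i a b c d x = (if a \<in> blk i \<and> b \<in> blk i \<and> c \<in> blk i \<and> d \<in> blk i
   then Rtab (eps i) (f i (x i)) (deriv (f i) (x i)) (loc i a) (loc i b) (loc i c) (loc i d) else 0)"
  using Ri_out[of i a b c d x] Ri_tab[of i "loc i a" "loc i b" "loc i c" "loc i d" x] emb_loc[of i] by auto


inductive good :: "nat \<Rightarrow> (real \<Rightarrow> real) \<Rightarrow> bool" for i :: nat where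
  good_const: "good i (\<lambda>t. c)"
| good_F: "good i (F i m)"
| good_add: "good i h1 \<Longrightarrow> good i h2 \<Longrightarrow> good i (\<lambda>t. h1 t + h2 t)"
| good_mult: "good i h1 \<Longrightarrow> good i h2 \<Longrightarrow> good i (\<lambda>t. h1 t * h2 t)"

lemma good_f: "good i (f i)" using good_F[of i 0] by simp
lemma good_df: "good i (deriv (f i))" using good_F[of i 1] by simp

lemma good_deriv: assumes "1 \<le> i" "i \<le> k" "good i h"
  shows "good i (deriv h) \<and> (\<forall>t. (h has_real_derivative deriv h t) (at t))"
  using assms(3)
proof induction
  case (good_const c)
  have "deriv (\<lambda>t. c) = (\<lambda>t. 0)" by (intro ext DERIV_imp_deriv) simp
  then show ?case by (simp add: good.good_const)
next
  case (good_F m)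
  then show ?case using DF[OF assms(1,2), of m] good.good_F[of i "Suc m"] by simp
next
  case (good_add h1 h2)
  have "deriv (\<lambda>t. h1 t + h2 t) = (\<lambda>t. deriv h1 t + deriv h2 t)"
    using good_add by (intro ext DERIV_imp_deriv) (auto intro!: derivative_eq_intros)
  then show ?case using good_add by (auto intro!: derivative_eq_intros good.good_add)
next
  case (good_mult h1 h2)
  have "deriv (\<lambda>t. h1 t * h2 t) = (\<lambda>t. deriv h1 t * h2 t + h1 t * deriv h2 t)"
    using good_mult by (intro ext DERIV_imp_deriv) (auto intro!: derivative_eq_intros)
  then show ?case using good_mult by (auto intro!: derivative_eq_intros good.good_add good.good_mult)
qed

lemma good_sum: "finite A \<Longrightarrow> (\<And>j. j \<in> A \<Longrightarrow> good i (h j)) \<Longrightarrow> good i (\<lambda>t. \<Sum>j\<in>A. h j t)"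
proof (induction A rule: finite_induct)
  case empty then show ?case using good_const[of i 0] by simp
next
  case (insert a A) then show ?case by (simp add: good_add)
qed

lemma good_if: "(P \<Longrightarrow> good i h) \<Longrightarrow> good i (\<lambda>t. if P then h t else 0)"
  using good_const[of i 0] by (cases P) simp_all

lemma good_cmult: "good i h \<Longrightarrow> good i (\<lambda>t. c * h t)"
  using good_mult[OF good_const] by blast

definition jmon :: "nat \<Rightarrow> (nat \<Rightarrow> nat) \<Rightarrow> (nat \<Rightarrow> real) \<Rightarrow> real" where "jmon N e y = (\<Prod>j\<le>N. (y j :: real) ^ e j)"

lemma jet_poly_jmon: "jet_poly N E c y = (\<Sum>e\<in>E. c e * jmon N e y)"
  by (simp add: jet_poly_def jmon_def)

definition supp_le :: "nat \<Rightarrow> (nat \<Rightarrow> nat) set \<Rightarrow> bool" where "supp_le N E \<longleftrightarrow> (\<forall>e\<in>E. \<forall>j>N. e j = (0::nat))"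

lemma jmon_ext: assumes "N \<le> N'" "\<forall>j>N. e j = 0" shows "jmon N e y = jmon N' e y"
  unfolding jmon_def
proof (rule prod.mono_neutral_left)
  show "finite {..N'}" by simp
  show "{..N} \<subseteq> {..N'}" using assms(1) by auto
  show "\<forall>j\<in>{..N'} - {..N}. y j ^ e j = 1"
  proof
    fix j assume "j \<in> {..N'} - {..N}"
    then have "N < j" by auto
    then have "e j = 0" by (rule assms(2)[rule_format])
    then show "y j ^ e j = 1" by simp
  qed
qed

lemma jet_ext: assumes "supp_le N E" "N \<le> N'" shows "jet_poly N E c y = jet_poly N' E c y \<and> supp_le N' E"
proof
  show "jet_poly N E c y = jet_poly N' E c y"
    unfolding jet_poly_jmon by (rule sum.cong[OF refl]) (use assms jmon_ext[of N N'] in \<open>simp add: supp_le_def\<close>)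
  show "supp_le N' E" using assms unfolding supp_le_def by simp
qed

definition JP where "JP i h \<longleftrightarrow> (\<exists>N E c. finite E \<and> supp_le N E \<and> (\<forall>t. h t = jet_poly N E c (\<lambda>j. F i j t)))"

lemma JP_ext: "JP i h \<Longrightarrow> \<exists>N0. \<forall>N\<ge>N0. \<exists>E c. finite E \<and> supp_le N E \<and> (\<forall>t. h t = jet_poly N E c (\<lambda>j. F i j t))"
proof -
  assume "JP i h"
  then obtain N E c where h: "finite E" "supp_le N E" "\<forall>t. h t = jet_poly N E c (\<lambda>j. F i j t)"
    unfolding JP_def by blast
  have "finite E \<and> supp_le N' E \<and> (\<forall>t. h t = jet_poly N' E c (\<lambda>j. F i j t))" if "N \<le> N'" for N'
    using h jet_ext[OF h(2) that] by simp
  then show ?thesis by blast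
qed

lemma jmon_add: "jmon N (\<lambda>j. a j + b j) y = jmon N a y * jmon N b y"
  by (simp add: jmon_def power_add prod.distrib)

lemma good_JP: assumes "good i h" shows "JP i h"
  using assms
proof induction
  case (good_const c)
  show ?case unfolding JP_def
    by (rule exI[of _ 0], rule exI[of _ "{\<lambda>_. 0}"], rule exI[of _ "\<lambda>_. c"]) (simp add: jet_poly_def supp_le_def)
next
  case (good_F m)
  have "(\<Prod>j\<le>m. F i j t ^ (if j = m then 1 else 0)) = F i m t" for t
  proof -
    have "(\<Prod>j\<le>m. F i j t ^ (if j = m then 1 else 0)) = (\<Prod>j\<le>m. if j = m then F i j t else 1)"
      by (rule prod.cong) auto
    then show ?thesis by simp
  qed
  then show ?case unfolding JP_def
    by (intro exI[of _ m] exI[of _ "{\<lambda>j. if j = m then 1 else 0}"] exI[of _ "\<lambda>_. 1"]) (simp add: jet_poly_def supp_le_def)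
next
  case (good_add h1 h2)
  obtain N1 where N1: "\<forall>N\<ge>N1. \<exists>E c. finite E \<and> supp_le N E \<and> (\<forall>t. h1 t = jet_poly N E c (\<lambda>j. F i j t))"
    using JP_ext[OF good_add.IH(1)] by blast
  obtain N2 where N2: "\<forall>N\<ge>N2. \<exists>E c. finite E \<and> supp_le N E \<and> (\<forall>t. h2 t = jet_poly N E c (\<lambda>j. F i j t))"
    using JP_ext[OF good_add.IH(2)] by blast
  define N where "N = max N1 N2"
  have "N1 \<le> N" "N2 \<le> N" by (simp_all add: N_def)
  then obtain E1 c1 E2 c2 where 1: "finite E1" "supp_le N E1" "\<forall>t. h1 t = jet_poly N E1 c1 (\<lambda>j. F i j t)"
    and 2: "finite E2" "supp_le N E2" "\<forall>t. h2 t = jet_poly N E2 c2 (\<lambda>j. F i j t)"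
    using N1 N2 by meson
  define c where "c e = (if e \<in> E1 then c1 e else 0) + (if e \<in> E2 then c2 e else 0)" for e
  have "jet_poly N (E1 \<union> E2) c y = jet_poly N E1 c1 y + jet_poly N E2 c2 y" for y
  proof -
    have "jet_poly N (E1 \<union> E2) c y = (\<Sum>e\<in>E1 \<union> E2. (if e \<in> E1 then c1 e * jmon N e y else 0))
        + (\<Sum>e\<in>E1 \<union> E2. (if e \<in> E2 then c2 e * jmon N e y else 0))"
      unfolding jet_poly_jmon c_def by (simp add: sum.distrib[symmetric] algebra_simps) (rule sum.cong; simp)
    also have "(\<Sum>e\<in>E1 \<union> E2. (if e \<in> E1 then c1 e * jmon N e y else 0)) = (\<Sum>e\<in>E1. c1 e * jmon N e y)"
      using 1 2 by (simp add: sum.If_cases Int_absorb1)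
    also have "(\<Sum>e\<in>E1 \<union> E2. (if e \<in> E2 then c2 e * jmon N e y else 0)) = (\<Sum>e\<in>E2. c2 e * jmon N e y)"
      using 1 2 by (simp add: sum.If_cases Int_absorb1)
    finally show ?thesis by (simp add: jet_poly_jmon)
  qed
  then show ?case unfolding JP_def using 1 2
    by (intro exI[of _ N] exI[of _ "E1 \<union> E2"] exI[of _ c]) (auto simp: supp_le_def)
next
  case (good_mult h1 h2)
  obtain N1 where N1: "\<forall>N\<ge>N1. \<exists>E c. finite E \<and> supp_le N E \<and> (\<forall>t. h1 t = jet_poly N E c (\<lambda>j. F i j t))"
    using JP_ext[OF good_mult.IH(1)] by blast
  obtain N2 where N2: "\<forall>N\<ge>N2. \<exists>E c. finite E \<and> supp_le N E \<and> (\<forall>t. h2 t = jet_poly N E c (\<lambda>j. F i j t))"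
    using JP_ext[OF good_mult.IH(2)] by blast
  define N where "N = max N1 N2"
  have "N1 \<le> N" "N2 \<le> N" by (simp_all add: N_def)
  then obtain E1 c1 E2 c2 where 1: "finite E1" "supp_le N E1" "\<forall>t. h1 t = jet_poly N E1 c1 (\<lambda>j. F i j t)"
    and 2: "finite E2" "supp_le N E2" "\<forall>t. h2 t = jet_poly N E2 c2 (\<lambda>j. F i j t)"
    using N1 N2 by meson
  define sf where "sf p = (\<lambda>j. fst p j + snd p j)" for p :: "(nat \<Rightarrow> nat) \<times> (nat \<Rightarrow> nat)"
  define E where "E = sf ` (E1 \<times> E2)"
  define c where "c e = (\<Sum>p\<in>{p \<in> E1 \<times> E2. sf p = e}. c1 (fst p) * c2 (snd p))" for e
  have fE: "finite E" using 1 2 by (simp add: E_def)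
  have "jet_poly N E c y = jet_poly N E1 c1 y * jet_poly N E2 c2 y" for y
  proof -
    have "jet_poly N E c y = (\<Sum>e\<in>E. \<Sum>p\<in>{p \<in> E1 \<times> E2. sf p = e}. c1 (fst p) * c2 (snd p) * jmon N (sf p) y)"
      unfolding jet_poly_jmon c_def by (simp add: sum_distrib_right)
    also have "\<dots> = (\<Sum>p\<in>E1 \<times> E2. c1 (fst p) * c2 (snd p) * jmon N (sf p) y)"
      by (rule sum.group) (use 1 2 fE in \<open>auto simp: E_def\<close>)
    also have "\<dots> = (\<Sum>p\<in>E1 \<times> E2. (c1 (fst p) * jmon N (fst p) y) * (c2 (snd p) * jmon N (snd p) y))"
      by (rule sum.cong) (auto simp: sf_def jmon_add)
    also have "\<dots> = jet_poly N E1 c1 y * jet_poly N E2 c2 y"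
      unfolding jet_poly_jmon sum_product sum.cartesian_product by (rule sum.cong) auto
    finally show ?thesis .
  qed
  moreover have "supp_le N E" using 1 2 by (auto simp: supp_le_def E_def sf_def)
  ultimately show ?case unfolding JP_def using 1 2 fE
    by (intro exI[of _ N] exI[of _ E] exI[of _ c]) auto
qed


definition cnt where "cnt i js = length (filter (\<lambda>a. a = s i) js)"
definition okblk where "okblk i js \<longleftrightarrow> set js \<subseteq> blk i \<and> cnt i js \<le> 1"

definition BlkG where "BlkG L T G \<longleftrightarrow> (\<forall>js i. 1 \<le> i \<and> i \<le> k \<longrightarrow> good i (G js i)) \<and>
   (\<forall>x js. length js = L \<longrightarrow> set js \<subseteq> {..<nn} \<longrightarrow> T x js = (\<Sum>i\<in>{1..k}. if okblk i js then G js i (x i) else 0))"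
definition Aprop where "Aprop L T \<longleftrightarrow> (\<forall>x js i. length js = L \<longrightarrow> set js \<subseteq> {..<nn} \<longrightarrow> 1 \<le> i \<longrightarrow> i \<le> k \<longrightarrow>
   (\<Sum>j<L. if js!j = i then T x (js[j := s i]) else 0) = 0)"
definition Inv where "Inv L T \<longleftrightarrow> (\<exists>G. BlkG L T G) \<and> Aprop L T"

lemma s_in_blk: "1 \<le> i \<Longrightarrow> i \<le> k \<Longrightarrow> 1 \<le> i' \<Longrightarrow> i' \<le> k \<Longrightarrow> s i \<in> blk i' \<longleftrightarrow> i = i'"
  by (auto simp: blk_def sidx_def)

lemma okblk_s: "1 \<le> i \<Longrightarrow> i \<le> k \<Longrightarrow> 1 \<le> i' \<Longrightarrow> i' \<le> k \<Longrightarrow> okblk i' js \<Longrightarrow> s i \<in> set js \<Longrightarrow> i' = i"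
  using s_in_blk[of i i'] by (auto simp: okblk_def)

lemma T_single: assumes "BlkG L T G" "length js = L" "set js \<subseteq> {..<nn}" "1 \<le> i" "i \<le> k" "s i \<in> set js"
  shows "T x js = (if okblk i js then G js i (x i) else 0)"
proof -
  have "T x js = (\<Sum>i'\<in>{1..k}. if okblk i' js then G js i' (x i') else 0)" using assms(1-3) by (simp add: BlkG_def)
  also have "\<dots> = (if okblk i js then G js i (x i) else 0)"
    by (rule sum_single) (use assms okblk_s in auto)
  finally show ?thesis .
qed

lemma T_out: assumes "BlkG L T G" "length js = L" "set js \<subseteq> {..<nn}" "m \<in> set js" "\<And>i. 1 \<le> i \<Longrightarrow> i \<le> k \<Longrightarrow> m \<notin> blk i"
  shows "T x js = 0"
proof -
  have "T x js = (\<Sum>i'\<in>{1..k}. if okblk i' js then G js i' (x i') else 0)" using assms(1-3) by (simp add: BlkG_def)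
  also have "\<dots> = 0" by (rule sum.neutral) (use assms in \<open>auto simp: okblk_def\<close>)
  finally show ?thesis .
qed

lemma Blk_D: assumes "BlkG L T G" "length js = L" "set js \<subseteq> {..<nn}"
  shows "((\<lambda>t. T (x(c:=t)) js) has_real_derivative (\<Sum>i\<in>{1..k}. if okblk i js \<and> c = i then deriv (G js i) (x i) else 0)) (at (x c))"
proof -
  have eq: "(\<lambda>t. T (x(c:=t)) js) = (\<lambda>t. \<Sum>i\<in>{1..k}. if okblk i js then G js i ((x(c:=t)) i) else 0)"
    using assms by (simp add: BlkG_def)
  have "((\<lambda>t. if okblk i js then G js i ((x(c:=t)) i) else 0) has_real_derivative (if okblk i js \<and> c = i then deriv (G js i) (x i) else 0)) (at (x c))"
    if i: "i \<in> {1..k}" for i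
  proof (cases "okblk i js \<and> c = i")
    case True
    have "good i (G js i)" using assms(1) i by (simp add: BlkG_def)
    then have "(G js i has_real_derivative deriv (G js i) (x i)) (at (x i))" using good_deriv i by auto
    then show ?thesis using True by simp
  next
    case False
    then have e1: "(\<lambda>t. if okblk i js then G js i ((x(c:=t)) i) else 0) = (\<lambda>t. if okblk i js then G js i (x i) else 0)"
      by auto
    have e2: "(if okblk i js \<and> c = i then deriv (G js i) (x i) else 0) = 0" using False by auto
    show ?thesis unfolding e1 e2 by (rule DERIV_const)
  qed
  then show ?thesis unfolding eq by (rule DERIV_sum)
qed

lemma Blk_pd: assumes "BlkG L T G" "length js = L" "set js \<subseteq> {..<nn}"
  shows "pd c (\<lambda>y. T y js) x = (\<Sum>i\<in>{1..k}. if okblk i js \<and> c = i then deriv (G js i) (x i) else 0)"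
  by (rule pd_D[OF Blk_D[OF assms]])

lemma Ci_s: "1 \<le> i \<Longrightarrow> i \<le> k \<Longrightarrow> Ci i c b (s i) x = (if (c = 0 \<and> b = i) \<or> (c = i \<and> b = 0) then - f i (x i) else if c = i \<and> b = i then x 0 else 0)"
  by (auto simp: Ci_def dgi_def P0_def Q0_def)

lemma christ2_s: "1 \<le> i \<Longrightarrow> i \<le> k \<Longrightarrow> christ2 nn gg c b x (s i) = eps i * Ci i c b (s i) x"
  by (simp add: christ2_eq sol_S christ1_s3)

lemma set_upd_sub: "set (xs[j:=m]) \<subseteq> insert m (set xs)"
  by (rule set_update_subset_insert)

lemma STEP: assumes B: "BlkG L T G" and A: "Aprop L T" and bl: "length bl = L" "set bl \<subseteq> {..<nn}" and c: "c < nn"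
  shows "cov_tensor nn gg T x (bl @ [c]) = pd c (\<lambda>y. T y bl) x +
    (\<Sum>i\<in>{1..k}. eps i * f i (x i) * (\<Sum>j<L. if (c = 0 \<and> bl!j = i) \<or> (c = i \<and> bl!j = 0) then T x (bl[j := s i]) else 0))"
proof -
  define P where "P i j = (if (c = 0 \<and> bl!j = i) \<or> (c = i \<and> bl!j = 0) then T x (bl[j := s i]) else 0)" for i j
  define Q where "Q i j = (if bl!j = i then T x (bl[j := s i]) else 0)" for i j
  have cov: "cov_tensor nn gg T x (bl @ [c]) = pd c (\<lambda>y. T y bl) x - (\<Sum>j<L. \<Sum>m<nn. christ2 nn gg c (bl!j) x m * T x (bl[j:=m]))"
    by (simp add: cov_tensor_def bl Let_def)
  have inner: "(\<Sum>m<nn. christ2 nn gg c (bl!j) x m * T x (bl[j:=m])) = (\<Sum>i\<in>{1..k}. - (eps i * f i (x i) * P i j) + (if c = i then eps i * x 0 * Q i j else 0))"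
    if j: "j < L" for j
  proof -
    have "(\<Sum>m<nn. christ2 nn gg c (bl!j) x m * T x (bl[j:=m])) = (\<Sum>i\<in>{1..k}. christ2 nn gg c (bl!j) x (s i) * T x (bl[j:=s i]))"
    proof (rule sum_S)
      fix m assume m: "m < nn" "m \<notin> s ` {1..k}"
      consider "m \<le> k" | "k < m \<and> m \<le> 2*k+1" | "2*k+2 \<le> m \<and> m \<le> 3*k+1" using m unfolding nn_def by linarith
      then show "christ2 nn gg c (bl!j) x m * T x (bl[j:=m]) = 0"
      proof cases
        case 1 then show ?thesis by (simp add: christ2_eq sol_U)
      next
        case 2
        have "T x (bl[j:=m]) = 0"
        proof (rule T_out[OF B])
          show "length (bl[j:=m]) = L" using bl by simp
          show "set (bl[j:=m]) \<subseteq> {..<nn}" using bl m set_upd_sub[of bl j m] by auto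
          show "m \<in> set (bl[j:=m])" using j bl by (simp add: set_update_memI)
          show "m \<notin> blk i" if "1 \<le> i" "i \<le> k" for i using V_notin_blk[OF that] 2 by simp
        qed
        then show ?thesis by simp
      next
        case 3
        then obtain i where "1 \<le> i" "i \<le> k" "m = s i" using S_cases by blast
        then have "m \<in> s ` {1..k}" by auto
        with m show ?thesis by blast
      qed
    qed
    also have "\<dots> = (\<Sum>i\<in>{1..k}. - (eps i * f i (x i) * P i j) + (if c = i then eps i * x 0 * Q i j else 0))"
    proof (rule sum.cong[OF refl])
      fix i assume i: "i \<in> {1..k}"
      then have i1: "1 \<le> i" "i \<le> k" by auto
      show "christ2 nn gg c (bl!j) x (s i) * T x (bl[j:=s i]) = - (eps i * f i (x i) * P i j) + (if c = i then eps i * x 0 * Q i j else 0)"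
        using i1 by (auto simp: christ2_s Ci_s P_def Q_def)
    qed
    finally show ?thesis .
  qed
  have Qz: "(\<Sum>j<L. Q i j) = 0" if "i \<in> {1..k}" for i
    using A bl that unfolding Aprop_def Q_def by auto
  have "(\<Sum>j<L. \<Sum>m<nn. christ2 nn gg c (bl!j) x m * T x (bl[j:=m]))
      = (\<Sum>j<L. \<Sum>i\<in>{1..k}. - (eps i * f i (x i) * P i j) + (if c = i then eps i * x 0 * Q i j else 0))"
    by (rule sum.cong[OF refl]) (simp add: inner)
  also have "\<dots> = (\<Sum>i\<in>{1..k}. \<Sum>j<L. - (eps i * f i (x i) * P i j) + (if c = i then eps i * x 0 * Q i j else 0))"
    by (rule sum.swap)
  also have "\<dots> = (\<Sum>i\<in>{1..k}. - (eps i * f i (x i) * (\<Sum>j<L. P i j)) + (if c = i then eps i * x 0 * (\<Sum>j<L. Q i j) else 0))"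
  proof (rule sum.cong[OF refl])
    fix i
    show "(\<Sum>j<L. - (eps i * f i (x i) * P i j) + (if c = i then eps i * x 0 * Q i j else 0)) =
      - (eps i * f i (x i) * (\<Sum>j<L. P i j)) + (if c = i then eps i * x 0 * (\<Sum>j<L. Q i j) else 0)"
      by (cases "c = i") (simp_all add: sum.distrib sum_distrib_left sum_negf sum_subtractf)
  qed
  also have "\<dots> = (\<Sum>i\<in>{1..k}. - (eps i * f i (x i) * (\<Sum>j<L. P i j)))"
    by (rule sum.cong[OF refl]) (simp add: Qz)
  finally show ?thesis unfolding cov P_def by (simp add: sum_negf)
qed


lemma cnt_upd: "j < length xs \<Longrightarrow> cnt i (xs[j:=y]) + (if xs!j = s i then 1 else 0) = cnt i xs + (if y = s i then 1 else 0)"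
proof (induction xs arbitrary: j)
  case Nil then show ?case by simp
next
  case (Cons a xs)
  show ?case
  proof (cases j)
    case 0 then show ?thesis by (simp add: cnt_def)
  next
    case (Suc j')
    then have "j' < length xs" using Cons.prems by simp
    from Cons.IH[OF this] show ?thesis using Suc by (cases "y = s i"; cases "xs!j' = s i") (simp_all add: cnt_def)
  qed
qed

lemma set_sub_upd: "j < length xs \<Longrightarrow> set xs \<subseteq> insert (xs!j) (set (xs[j:=y]))"
proof -
  assume j: "j < length xs"
  have "xs = (xs[j:=y])[j := xs!j]" using j by simp
  then have "set xs = set ((xs[j:=y])[j := xs!j])" by simp
  also have "\<dots> \<subseteq> insert (xs!j) (set (xs[j:=y]))" by (rule set_update_subset_insert)
  finally show ?thesis .
qed

lemma OK1: "1 \<le> i \<Longrightarrow> i \<le> k \<Longrightarrow> okblk i bl \<Longrightarrow> okblk i (bl @ [i])"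
  by (auto simp: okblk_def cnt_def blk_def)

lemma OK2: assumes "1 \<le> i" "i \<le> k" "j < length bl" "okblk i (bl[j:=s i])" "bl!j \<in> {0, i}" "c \<in> {0, i}"
  shows "okblk i (bl @ [c])"
proof -
  have "set bl \<subseteq> blk i" using set_sub_upd[OF assms(3), of "s i"] assms(4,5) by (auto simp: okblk_def blk_def)
  moreover have "c \<in> blk i" using assms(6) by (auto simp: blk_def)
  moreover have "bl!j \<noteq> s i" using assms(1,2,5) by auto
  then have "cnt i bl + 1 = cnt i (bl[j:=s i])" using cnt_upd[OF assms(3), of i "s i"] by simp
  then have "cnt i bl = 0" using assms(4) by (simp add: okblk_def)
  moreover have "c \<noteq> s i" using assms(1,2,6) by auto
  ultimately show ?thesis by (simp add: okblk_def cnt_def)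
qed

lemma nabla_s: assumes B: "BlkG L T G" and A: "Aprop L T" and bl: "length bl = L" "set bl \<subseteq> {..<nn}" and i: "1 \<le> i" "i \<le> k"
  shows "cov_tensor nn gg T x (bl @ [s i]) = 0"
proof -
  have "pd (s i) (\<lambda>y. T y bl) x = 0"
    unfolding Blk_pd[OF B bl] by (rule sum.neutral) auto
  moreover have "(\<Sum>j<L. if (s i = 0 \<and> bl!j = i') \<or> (s i = i' \<and> bl!j = 0) then T x (bl[j := s i']) else 0) = 0"
    if "i' \<in> {1..k}" for i'
  proof -
    have "s i \<noteq> i'" "s i \<noteq> 0" using that by (auto simp: sidx_def)
    then show ?thesis by simp
  qed
  ultimately show ?thesis using STEP[OF B A bl, of "s i" x] i by simp
qed

lemma nabla_0: assumes B: "BlkG L T G" and A: "Aprop L T" and bl: "length bl = L" "set bl \<subseteq> {..<nn}"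
  shows "cov_tensor nn gg T x (bl @ [0]) = 0"
proof -
  have "pd 0 (\<lambda>y. T y bl) x = 0"
    unfolding Blk_pd[OF B bl] by (rule sum.neutral) auto
  moreover have "(\<Sum>j<L. if (0 = 0 \<and> bl!j = i') \<or> (0 = i' \<and> bl!j = 0) then T x (bl[j := s i']) else 0) = 0"
    if "i' \<in> {1..k}" for i'
  proof -
    have "(\<Sum>j<L. if (0 = 0 \<and> bl!j = i') \<or> (0 = i' \<and> bl!j = 0) then T x (bl[j := s i']) else 0)
       = (\<Sum>j<L. if bl!j = i' then T x (bl[j := s i']) else 0)" using that by (intro sum.cong) auto
    also have "\<dots> = 0" using A bl that unfolding Aprop_def by auto
    finally show ?thesis .
  qed
  ultimately show ?thesis using STEP[OF B A bl, of 0 x] by (simp add: nn_def)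
qed


lemma snoc_split: "length js = Suc L \<Longrightarrow> js = butlast js @ [last js] \<and> length (butlast js) = L"
  by (metis append_butlast_last_id diff_Suc_1 length_butlast list.size(3) nat.simps(3))

lemma Blk_step: assumes B: "BlkG L T G" and A: "Aprop L T"
  shows "\<exists>G'. BlkG (Suc L) (cov_tensor nn gg T) G'"
proof -
  define G' where "G' js' i t = (let bl = butlast js'; c = last js' in if okblk i js' then
     (if okblk i bl \<and> c = i then deriv (G bl i) t else 0) + eps i * f i t *
     (\<Sum>j<L. if ((c = 0 \<and> bl!j = i) \<or> (c = i \<and> bl!j = 0)) \<and> okblk i (bl[j := s i]) then G (bl[j := s i]) i t else 0)
     else 0)" for js' i t
  have gG: "good i (G js i)" if "1 \<le> i" "i \<le> k" for js i using B that by (simp add: BlkG_def)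
  have "good i (G' js' i)" if i: "1 \<le> i" "i \<le> k" for js' i
  proof -
    let ?bl = "butlast js'" and ?c = "last js'"
    have g1: "good i (\<lambda>t. if okblk i ?bl \<and> ?c = i then deriv (G ?bl i) t else 0)"
      by (rule good_if) (use good_deriv[OF i gG[OF i]] in blast)
    have g2: "good i (\<lambda>t. \<Sum>j<L. if ((?c = 0 \<and> ?bl!j = i) \<or> (?c = i \<and> ?bl!j = 0)) \<and> okblk i (?bl[j := s i]) then G (?bl[j := s i]) i t else 0)"
      by (rule good_sum) (auto intro!: good_if gG[OF i])
    have g3: "good i (\<lambda>t. eps i * f i t * (\<Sum>j<L. if ((?c = 0 \<and> ?bl!j = i) \<or> (?c = i \<and> ?bl!j = 0)) \<and> okblk i (?bl[j := s i]) then G (?bl[j := s i]) i t else 0))"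
      by (rule good_mult[OF good_cmult[OF good_f] g2])
    have "good i (\<lambda>t. if okblk i js' then (if okblk i ?bl \<and> ?c = i then deriv (G ?bl i) t else 0) + eps i * f i t *
     (\<Sum>j<L. if ((?c = 0 \<and> ?bl!j = i) \<or> (?c = i \<and> ?bl!j = 0)) \<and> okblk i (?bl[j := s i]) then G (?bl[j := s i]) i t else 0) else 0)"
      by (rule good_if, rule good_add[OF g1 g3])
    moreover have "G' js' i = (\<lambda>t. if okblk i js' then (if okblk i ?bl \<and> ?c = i then deriv (G ?bl i) t else 0) + eps i * f i t *
     (\<Sum>j<L. if ((?c = 0 \<and> ?bl!j = i) \<or> (?c = i \<and> ?bl!j = 0)) \<and> okblk i (?bl[j := s i]) then G (?bl[j := s i]) i t else 0) else 0)"
      by (simp add: G'_def Let_def fun_eq_iff)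
    ultimately show ?thesis by simp
  qed
  moreover have "cov_tensor nn gg T x js' = (\<Sum>i\<in>{1..k}. if okblk i js' then G' js' i (x i) else 0)"
    if js': "length js' = Suc L" "set js' \<subseteq> {..<nn}" for x js'
  proof -
    define bl where "bl = butlast js'"
    define c where "c = last js'"
    have jsd: "js' = bl @ [c]" and lbl: "length bl = L" using snoc_split[OF js'(1)] by (simp_all add: bl_def c_def)
    have sbl: "set bl \<subseteq> {..<nn}" and cn: "c < nn" using js'(2) unfolding jsd by auto
    have Tj: "T x (bl[j := s i]) = (if okblk i (bl[j := s i]) then G (bl[j := s i]) i (x i) else 0)"
      if "j < L" "1 \<le> i" "i \<le> k" for i j
    proof (rule T_single[OF B])
      show "length (bl[j := s i]) = L" using lbl by simp
      show "set (bl[j := s i]) \<subseteq> {..<nn}" using sbl set_upd_sub[of bl j "s i"] that by auto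
      show "s i \<in> set (bl[j := s i])" using that lbl by (simp add: set_update_memI)
    qed (use that in auto)
    have "cov_tensor nn gg T x js' = (\<Sum>i\<in>{1..k}. if okblk i bl \<and> c = i then deriv (G bl i) (x i) else 0) +
       (\<Sum>i\<in>{1..k}. eps i * f i (x i) * (\<Sum>j<L. if (c = 0 \<and> bl!j = i) \<or> (c = i \<and> bl!j = 0) then T x (bl[j := s i]) else 0))"
      unfolding jsd STEP[OF B A lbl sbl cn] Blk_pd[OF B lbl sbl] ..
    also have "\<dots> = (\<Sum>i\<in>{1..k}. (if okblk i bl \<and> c = i then deriv (G bl i) (x i) else 0) +
       eps i * f i (x i) * (\<Sum>j<L. if ((c = 0 \<and> bl!j = i) \<or> (c = i \<and> bl!j = 0)) \<and> okblk i (bl[j := s i]) then G (bl[j := s i]) i (x i) else 0))"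
      unfolding sum.distrib[symmetric]
    proof (rule sum.cong[OF refl])
      fix i assume "i \<in> {1..k}"
      then have i: "1 \<le> i" "i \<le> k" by auto
      have "(\<Sum>j<L. if (c = 0 \<and> bl!j = i) \<or> (c = i \<and> bl!j = 0) then T x (bl[j := s i]) else 0)
          = (\<Sum>j<L. if ((c = 0 \<and> bl!j = i) \<or> (c = i \<and> bl!j = 0)) \<and> okblk i (bl[j := s i]) then G (bl[j := s i]) i (x i) else 0)"
        by (rule sum.cong[OF refl]) (use Tj i in auto)
      then show "(if okblk i bl \<and> c = i then deriv (G bl i) (x i) else 0) +
          eps i * f i (x i) * (\<Sum>j<L. if (c = 0 \<and> bl!j = i) \<or> (c = i \<and> bl!j = 0) then T x (bl[j := s i]) else 0) =
          (if okblk i bl \<and> c = i then deriv (G bl i) (x i) else 0) +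
          eps i * f i (x i) * (\<Sum>j<L. if ((c = 0 \<and> bl!j = i) \<or> (c = i \<and> bl!j = 0)) \<and> okblk i (bl[j := s i]) then G (bl[j := s i]) i (x i) else 0)"
        by simp
    qed
    also have "\<dots> = (\<Sum>i\<in>{1..k}. if okblk i js' then G' js' i (x i) else 0)"
    proof (rule sum.cong[OF refl])
      fix i assume "i \<in> {1..k}"
      then have i: "1 \<le> i" "i \<le> k" by auto
      show "(if okblk i bl \<and> c = i then deriv (G bl i) (x i) else 0) +
          eps i * f i (x i) * (\<Sum>j<L. if ((c = 0 \<and> bl!j = i) \<or> (c = i \<and> bl!j = 0)) \<and> okblk i (bl[j := s i]) then G (bl[j := s i]) i (x i) else 0)
          = (if okblk i js' then G' js' i (x i) else 0)"
      proof (cases "okblk i js'")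
        case True
        then show ?thesis unfolding G'_def Let_def bl_def[symmetric] c_def[symmetric] by simp
      next
        case False
        have z1: "(if okblk i bl \<and> c = i then deriv (G bl i) (x i) else 0) = 0"
          using OK1[OF i, of bl] False jsd by auto
        have z2: "(\<Sum>j<L. if ((c = 0 \<and> bl!j = i) \<or> (c = i \<and> bl!j = 0)) \<and> okblk i (bl[j := s i]) then G (bl[j := s i]) i (x i) else 0) = 0"
        proof (rule sum.neutral, intro ballI)
          fix j assume "j \<in> {..<L}"
          then have j: "j < length bl" using lbl by simp
          show "(if ((c = 0 \<and> bl!j = i) \<or> (c = i \<and> bl!j = 0)) \<and> okblk i (bl[j := s i]) then G (bl[j := s i]) i (x i) else 0) = 0"
            using OK2[OF i j, of c] False jsd by auto
        qed
        show ?thesis using False z1 z2 by simp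
      qed
    qed
    finally show ?thesis .
  qed
  ultimately show ?thesis unfolding BlkG_def by blast
qed


lemma sum_if_const: "(\<Sum>j\<in>A. if C then g j else (0::real)) = (if C then sum g A else 0)"
  by (cases C) simp_all

lemma swap_pt: assumes j: "j < length bl" and j': "j' < length bl" and i: "1 \<le> i" "i \<le> k" and i': "1 \<le> i'" "i' \<le> k"
  shows "(if bl!j = i then (if (c = 0 \<and> bl[j:=s i]!j' = i') \<or> (c = i' \<and> bl[j:=s i]!j' = 0) then T x ((bl[j:=s i])[j':=s i']) else 0) else 0)
       = (if (c = 0 \<and> bl!j' = i') \<or> (c = i' \<and> bl!j' = 0) then (if bl[j':=s i']!j = i then T x ((bl[j':=s i'])[j:=s i]) else 0) else 0)"
proof (cases "j = j'")
  case True
  have "s i \<noteq> i'" "s i' \<noteq> i" "s i \<noteq> 0" "s i' \<noteq> 0" using i i' by (auto simp: sidx_def)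
  then show ?thesis using True j by simp
next
  case False
  then show ?thesis using j j' by (simp add: list_update_swap)
qed

lemma A_step: assumes B: "BlkG L T G" and A: "Aprop L T"
  shows "Aprop (Suc L) (cov_tensor nn gg T)"
  unfolding Aprop_def
proof (intro allI impI)
  fix x js' i assume js': "length js' = Suc L" "set js' \<subseteq> {..<nn}" and i: "1 \<le> i" "i \<le> k"
  define bl where "bl = butlast js'"
  define c where "c = last js'"
  have jsd: "js' = bl @ [c]" and lbl: "length bl = L" using snoc_split[OF js'(1)] by (simp_all add: bl_def c_def)
  have sbl: "set bl \<subseteq> {..<nn}" and cn: "c < nn" using js'(2) unfolding jsd by auto
  have lbj: "length (bl[j:=s i]) = L" for j using lbl by simp
  have sbj: "set (bl[j:=s i]) \<subseteq> {..<nn}" for j using sbl set_upd_sub[of bl j "s i"] i by auto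
  define S where "S i' j = (\<Sum>j'<L. if (c = 0 \<and> bl[j:=s i]!j' = i') \<or> (c = i' \<and> bl[j:=s i]!j' = 0) then T x ((bl[j:=s i])[j' := s i']) else 0)" for i' j
  define pdj where "pdj j = pd c (\<lambda>y. T y (bl[j:=s i])) x" for j
  have covj: "cov_tensor nn gg T x (bl[j:=s i] @ [c]) = pdj j + (\<Sum>i'\<in>{1..k}. eps i' * f i' (x i') * S i' j)" for j
    unfolding pdj_def S_def by (rule STEP[OF B A lbj sbj cn])
  have part1: "(\<Sum>j<L. if bl!j = i then pdj j else 0) = 0"
  proof -
    have D: "((\<lambda>t. T (x(c:=t)) (bl[j:=s i])) has_real_derivative pdj j) (at (x c))" for j
      using Blk_D[OF B lbj sbj, of x c j] unfolding pdj_def Blk_pd[OF B lbj sbj] .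
    have DS: "((\<lambda>t. \<Sum>j<L. if bl!j = i then T (x(c:=t)) (bl[j:=s i]) else 0) has_real_derivative (\<Sum>j<L. if bl!j = i then pdj j else 0)) (at (x c))"
    proof (rule DERIV_sum)
      fix j
      show "((\<lambda>t. if bl!j = i then T (x(c:=t)) (bl[j:=s i]) else 0) has_real_derivative (if bl!j = i then pdj j else 0)) (at (x c))"
        by (cases "bl!j = i") (simp_all add: D)
    qed
    have Z: "(\<lambda>t. \<Sum>j<L. if bl!j = i then T (x(c:=t)) (bl[j:=s i]) else 0) = (\<lambda>t. 0)"
      using A lbl sbl i unfolding Aprop_def by auto
    have "((\<lambda>t. 0::real) has_real_derivative 0) (at (x c))" by simp
    then show ?thesis using DS unfolding Z by (rule DERIV_unique[symmetric])
  qed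
  have part2: "(\<Sum>j<L. if bl!j = i then S i' j else 0) = 0" if i': "1 \<le> i'" "i' \<le> k" for i'
  proof -
    have "(\<Sum>j<L. if bl!j = i then S i' j else 0) = (\<Sum>j<L. \<Sum>j'<L. if bl!j = i then (if (c = 0 \<and> bl[j:=s i]!j' = i') \<or> (c = i' \<and> bl[j:=s i]!j' = 0) then T x ((bl[j:=s i])[j' := s i']) else 0) else 0)"
      unfolding S_def by (rule sum.cong[OF refl]) simp
    also have "\<dots> = (\<Sum>j<L. \<Sum>j'<L. if (c = 0 \<and> bl!j' = i') \<or> (c = i' \<and> bl!j' = 0) then (if bl[j':=s i']!j = i then T x ((bl[j':=s i'])[j:=s i]) else 0) else 0)"
      by (intro sum.cong[OF refl]) (use lbl i i' swap_pt[of _ bl _ i i' c T x] in auto)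
    also have "\<dots> = (\<Sum>j'<L. \<Sum>j<L. if (c = 0 \<and> bl!j' = i') \<or> (c = i' \<and> bl!j' = 0) then (if bl[j':=s i']!j = i then T x ((bl[j':=s i'])[j:=s i]) else 0) else 0)"
      by (rule sum.swap)
    also have "\<dots> = 0"
    proof (rule sum.neutral, intro ballI)
      fix j' assume j': "j' \<in> {..<L}"
      have l': "length (bl[j':=s i']) = L" using lbl by simp
      have s': "set (bl[j':=s i']) \<subseteq> {..<nn}" using sbl set_upd_sub[of bl j' "s i'"] i' by auto
      have "(\<Sum>j<L. if bl[j':=s i']!j = i then T x ((bl[j':=s i'])[j:=s i]) else 0) = 0"
        using A l' s' i unfolding Aprop_def by blast
      then show "(\<Sum>j<L. if (c = 0 \<and> bl!j' = i') \<or> (c = i' \<and> bl!j' = 0) then (if bl[j':=s i']!j = i then T x ((bl[j':=s i'])[j:=s i]) else 0) else 0) = 0"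
        by (simp only: sum_if_const) simp
    qed
    finally show ?thesis .
  qed
  have "(\<Sum>j<L. if js'!j = i then cov_tensor nn gg T x (js'[j := s i]) else 0)
      = (\<Sum>j<L. if bl!j = i then pdj j + (\<Sum>i'\<in>{1..k}. eps i' * f i' (x i') * S i' j) else 0)"
  proof (rule sum.cong[OF refl])
    fix j assume "j \<in> {..<L}"
    then have "j < length bl" using lbl by simp
    then show "(if js'!j = i then cov_tensor nn gg T x (js'[j := s i]) else 0) = (if bl!j = i then pdj j + (\<Sum>i'\<in>{1..k}. eps i' * f i' (x i') * S i' j) else 0)"
      unfolding jsd by (simp add: nth_append list_update_append1 covj)
  qed
  also have "\<dots> = (\<Sum>j<L. if bl!j = i then pdj j else 0) + (\<Sum>i'\<in>{1..k}. eps i' * f i' (x i') * (\<Sum>j<L. if bl!j = i then S i' j else 0))"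
  proof -
    have e: "(if bl!j = i then pdj j + (\<Sum>i'\<in>{1..k}. eps i' * f i' (x i') * S i' j) else 0) =
       (if bl!j = i then pdj j else 0) + (\<Sum>i'\<in>{1..k}. eps i' * f i' (x i') * (if bl!j = i then S i' j else 0))" for j
      by (cases "bl!j = i") simp_all
    show ?thesis unfolding e sum.distrib sum_distrib_left by (subst sum.swap) simp
  qed
  also have "\<dots> = 0" using part1 part2 by simp
  finally have low: "(\<Sum>j<L. if js'!j = i then cov_tensor nn gg T x (js'[j := s i]) else 0) = 0" .
  have top: "(if js'!L = i then cov_tensor nn gg T x (js'[L := s i]) else 0) = 0"
    using nabla_s[OF B A lbl sbl i, of x] unfolding jsd lbl[symmetric] by simp
  show "(\<Sum>j<Suc L. if js'!j = i then cov_tensor nn gg T x (js'[j := s i]) else 0) = 0"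
    using low top by simp
qed


lemma sum4: "(\<Sum>j::nat<4. h j) = h 0 + h 1 + h 2 + (h 3 :: real)"
  by (simp add: eval_nat_numeral)

lemma len4: "length js = 4 \<Longrightarrow> \<exists>a b c d. js = [a,b,c,d]"
  by (auto simp: eval_nat_numeral length_Suc_conv)

definition R0 where "R0 = (\<lambda>x is. riem nn gg (is!0) (is!1) (is!2) (is!3) x)"

definition G0 where "G0 js i t = (if okblk i js then Rtab (eps i) (f i t) (deriv (f i) t) (loc i (js!0)) (loc i (js!1)) (loc i (js!2)) (loc i (js!3)) else 0)"

lemma loc_S: "1 \<le> i \<Longrightarrow> i \<le> k \<Longrightarrow> a \<in> blk i \<Longrightarrow> (loc i a = LS) = (a = s i)"
  by (auto simp: loc_def blk_def)
lemma loc_I: "1 \<le> i \<Longrightarrow> i \<le> k \<Longrightarrow> a \<in> blk i \<Longrightarrow> (loc i a = LI) = (a = i)"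
  by (auto simp: loc_def blk_def)
lemma loc_si: "1 \<le> i \<Longrightarrow> i \<le> k \<Longrightarrow> loc i (s i) = LS"
  by (auto simp: loc_def)
lemma si_blk: "s i \<in> blk i" "0 \<in> blk i" "i \<in> blk i" by (auto simp: blk_def)

lemma good_G0: "1 \<le> i \<Longrightarrow> i \<le> k \<Longrightarrow> good i (G0 js i)"
proof -
  assume i: "1 \<le> i" "i \<le> k"
  define C1 where "C1 = sg1 (loc i (js!0)) (loc i (js!1)) * sg1 (loc i (js!3)) (loc i (js!2))"
  define C2 where "C2 = sg1 (loc i (js!0)) (loc i (js!1)) * sg2 (loc i (js!2)) (loc i (js!3)) + sg2 (loc i (js!0)) (loc i (js!1)) * sg1 (loc i (js!2)) (loc i (js!3))"
  have "G0 js i = (\<lambda>t. if okblk i js then eps i * f i t * f i t * C1 + (1 + deriv (f i) t) * C2 else 0)"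
    by (simp add: G0_def Rtab_def C1_def C2_def fun_eq_iff)
  moreover have "good i (\<lambda>t. eps i * f i t * f i t * C1 + (1 + deriv (f i) t) * C2)"
    by (intro good_add good_mult good_const good_f good_df)
  ultimately show ?thesis by (simp add: good_if)
qed

lemma riem_blk: assumes "a < nn" "b < nn" "c < nn" "d < nn" "1 \<le> i" "i \<le> k"
  shows "Ri i a b c d x = (if okblk i [a,b,c,d] then G0 [a,b,c,d] i (x i) else 0)"
proof (cases "a \<in> blk i \<and> b \<in> blk i \<and> c \<in> blk i \<and> d \<in> blk i")
  case True
  note lS = loc_S[OF assms(5,6)]
  have cnt: "length (filter (\<lambda>l. l = LS) [loc i a, loc i b, loc i c, loc i d]) = cnt i [a,b,c,d]"
    using True by (simp add: cnt_def lS)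
  show ?thesis
  proof (cases "okblk i [a,b,c,d]")
    case True
    then show ?thesis using \<open>a \<in> blk i \<and> b \<in> blk i \<and> c \<in> blk i \<and> d \<in> blk i\<close> assms by (simp add: RiE G0_def)
  next
    case False
    then have "cnt i [a,b,c,d] \<ge> 2" using \<open>a \<in> blk i \<and> b \<in> blk i \<and> c \<in> blk i \<and> d \<in> blk i\<close> by (auto simp: okblk_def)
    then show ?thesis using False Rtab_SS cnt assms by (simp add: RiE)
  qed
next
  case False
  then have "\<not> okblk i [a,b,c,d]" by (auto simp: okblk_def)
  moreover have "Ri i a b c d x = 0" using False assms by (intro Ri_out) auto
  ultimately show ?thesis by simp
qed

lemma Blk0: "BlkG 4 R0 G0"
  unfolding BlkG_def
proof (intro conjI allI impI)
  fix js i assume "1 \<le> i \<and> i \<le> k" then show "good i (G0 js i)" using good_G0 by auto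
next
  fix x and js :: "nat list" assume js: "length js = 4" "set js \<subseteq> {..<nn}"
  then obtain a b c d where abcd: "js = [a,b,c,d]" using len4 by blast
  have lt: "a < nn" "b < nn" "c < nn" "d < nn" using js abcd by auto
  show "R0 x js = (\<Sum>i\<in>{1..k}. if okblk i js then G0 js i (x i) else 0)"
    unfolding abcd R0_def using lt by (simp add: riem_eq riem_blk)
qed

lemma riem_si: assumes "a < nn" "b < nn" "c < nn" "d < nn" "1 \<le> i" "i \<le> k" "s i \<in> {a,b,c,d}"
  shows "riem nn gg a b c d x = Ri i a b c d x"
proof -
  have "riem nn gg a b c d x = (\<Sum>i'\<in>{1..k}. Ri i' a b c d x)" using assms by (simp add: riem_eq)
  also have "\<dots> = Ri i a b c d x"
  proof (rule sum_single)
    fix i' assume "i' \<in> {1..k}" "i' \<noteq> i"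
    then have "s i \<notin> blk i'" using s_in_blk[OF assms(5,6), of i'] by auto
    then show "Ri i' a b c d x = 0" using assms(7) \<open>i' \<in> {1..k}\<close> by (intro Ri_out) auto
  qed (use assms in auto)
  finally show ?thesis .
qed

lemma A0: "Aprop 4 R0"
  unfolding Aprop_def
proof (intro allI impI)
  fix x and js :: "nat list" and i assume js: "length js = 4" "set js \<subseteq> {..<nn}" and i: "1 \<le> i" "i \<le> k"
  then obtain a b c d where abcd: "js = [a,b,c,d]" using len4 by blast
  have lt: "a < nn" "b < nn" "c < nn" "d < nn" using js abcd by auto
  have si: "s i < nn" using i by simp
  have "(\<Sum>j<4. if js!j = i then R0 x (js[j := s i]) else 0) =
     (if a = i then Ri i (s i) b c d x else 0) + (if b = i then Ri i a (s i) c d x else 0) +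
     (if c = i then Ri i a b (s i) d x else 0) + (if d = i then Ri i a b c (s i) x else 0)"
    unfolding sum4 abcd R0_def using lt si i by (simp add: riem_si)
  also have "\<dots> = 0"
  proof (cases "a \<in> blk i \<and> b \<in> blk i \<and> c \<in> blk i \<and> d \<in> blk i")
    case True
    let ?R = "Rtab (eps i) (f i (x i)) (deriv (f i) (x i))"
    have e1: "(if a = i then Ri i (s i) b c d x else 0) = (if loc i a = LI then ?R LS (loc i b) (loc i c) (loc i d) else 0)"
      using True i by (simp add: RiE loc_si si_blk loc_I)
    have e2: "(if b = i then Ri i a (s i) c d x else 0) = (if loc i b = LI then ?R (loc i a) LS (loc i c) (loc i d) else 0)"
      using True i by (simp add: RiE loc_si si_blk loc_I)
    have e3: "(if c = i then Ri i a b (s i) d x else 0) = (if loc i c = LI then ?R (loc i a) (loc i b) LS (loc i d) else 0)"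
      using True i by (simp add: RiE loc_si si_blk loc_I)
    have e4: "(if d = i then Ri i a b c (s i) x else 0) = (if loc i d = LI then ?R (loc i a) (loc i b) (loc i c) LS else 0)"
      using True i by (simp add: RiE loc_si si_blk loc_I)
    show ?thesis unfolding e1 e2 e3 e4 by (rule Rtab_A)
  next
    case False
    then show ?thesis using i by (auto simp: RiE si_blk)
  qed
  finally show "(\<Sum>j<4. if js!j = i then R0 x (js[j := s i]) else 0) = 0" .
qed


lemma Inv_all: "\<exists>G. BlkG (4 + l) (nabla_R nn gg l) G \<and> Aprop (4 + l) (nabla_R nn gg l)"
proof (induction l)
  case 0
  have "nabla_R nn gg 0 = R0" by (simp add: nabla_R_def R0_def)
  then show ?case using Blk0 A0 by auto
next
  case (Suc l)
  then obtain G where B: "BlkG (4 + l) (nabla_R nn gg l) G" and A: "Aprop (4 + l) (nabla_R nn gg l)" by blast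
  have e: "nabla_R nn gg (Suc l) = cov_tensor nn gg (nabla_R nn gg l)" by (simp add: nabla_R_def)
  show ?case unfolding e using Blk_step[OF B A] A_step[OF B A] by simp
qed

lemma claim1: assumes i: "1 \<le> i" "i \<le> k"
  shows "nabla_R nn gg l x ([0, i, i, s i] @ replicate l i) = (if l = 0 then 1 else 0) + F i (Suc l) (x i)"
proof (induction l arbitrary: x)
  case 0
  have "nabla_R nn gg 0 x [0, i, i, s i] = riem nn gg 0 i i (s i) x" by (simp add: nabla_R_def)
  also have "\<dots> = Ri i 0 i i (s i) x" using i by (intro riem_si) (auto simp: nn_def sidx_def)
  also have "\<dots> = 1 + deriv (f i) (x i)" using i by (simp add: RiE si_blk loc_def Rtab_def)
  finally show ?case by simp
next
  case (Suc l)
  obtain G where B: "BlkG (4 + l) (nabla_R nn gg l) G" and A: "Aprop (4 + l) (nabla_R nn gg l)" using Inv_all by blast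
  define bl where "bl = [0, i, i, s i] @ replicate l i"
  have lbl: "length bl = 4 + l" by (simp add: bl_def)
  have sbl: "set bl \<subseteq> {..<nn}" using i by (auto simp: bl_def nn_def sidx_def)
  have lst: "[0, i, i, s i] @ replicate (Suc l) i = bl @ [i]" by (simp add: bl_def replicate_append_same)
  have e: "nabla_R nn gg (Suc l) = cov_tensor nn gg (nabla_R nn gg l)" by (simp add: nabla_R_def)
  have eq: "(\<lambda>t. nabla_R nn gg l (x(i:=t)) bl) = (\<lambda>t. (if l = 0 then 1 else 0) + F i (Suc l) t)"
    using Suc.IH by (simp add: bl_def)
  have D: "((\<lambda>t. (if l = 0 then 1 else 0) + F i (Suc l) t) has_real_derivative F i (Suc (Suc l)) (x i)) (at (x i))"
    using DERIV_add[OF DERIV_const[of "if l = 0 then 1 else 0"] DF[OF i, of "Suc l" "x i"]] by simp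
  have "((\<lambda>t. nabla_R nn gg l (x(i:=t)) bl) has_real_derivative F i (Suc (Suc l)) (x i)) (at (x i))"
    unfolding eq by (rule D)
  from pd_D[OF this] have pdv: "pd i (\<lambda>y. nabla_R nn gg l y bl) x = F i (Suc (Suc l)) (x i)" .
  have z: "(if (i = 0 \<and> bl!j = i') \<or> (i = i' \<and> bl!j = 0) then nabla_R nn gg l x (bl[j := s i']) else 0) = 0"
    if "j < 4 + l" "i' \<in> {1..k}" for j i'
  proof (cases "i' = i \<and> j = 0")
    case True
    have "nabla_R nn gg l x (bl[j := s i]) = (if okblk i (bl[j := s i]) then G (bl[j := s i]) i (x i) else 0)"
    proof (rule T_single[OF B])
      show "length (bl[j := s i]) = 4 + l" using lbl by simp
      show "set (bl[j := s i]) \<subseteq> {..<nn}" using sbl set_upd_sub[of bl j "s i"] i by auto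
      show "s i \<in> set (bl[j := s i])" using that lbl by (simp add: set_update_memI)
    qed (use i in auto)
    moreover have "\<not> okblk i (bl[j := s i])" using True i by (simp add: bl_def okblk_def cnt_def filter_replicate)
    ultimately show ?thesis using True by simp
  next
    case False
    have "bl!j \<noteq> 0" if "j \<noteq> 0"
    proof -
      obtain j' where "j = Suc j'" using \<open>j \<noteq> 0\<close> not0_implies_Suc by blast
      then have e1: "bl!j = ([i, i, s i] @ replicate l i) ! j'" by (simp add: bl_def)
      have "j' < length ([i, i, s i] @ replicate l i)" using \<open>j = Suc j'\<close> \<open>j < 4 + l\<close> by simp
      then have "([i, i, s i] @ replicate l i) ! j' \<in> set ([i, i, s i] @ replicate l i)" by (rule nth_mem)
      then have "bl!j \<in> set ([i, i, s i] @ replicate l i)" using e1 by simp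
      then show ?thesis using i by (auto simp: sidx_def)
    qed
    then show ?thesis using False i by auto
  qed
  have cn: "i < nn" using i by (simp add: nn_def)
  have zs: "(\<Sum>j<4+l. if (i = 0 \<and> bl!j = i') \<or> (i = i' \<and> bl!j = 0) then nabla_R nn gg l x (bl[j := s i']) else 0) = 0"
    if "i' \<in> {1..k}" for i'
    by (intro sum.neutral ballI z) (use that in simp_all)
  have zz: "(\<Sum>i'\<in>{1..k}. eps i' * f i' (x i') * (\<Sum>j<4+l. if (i = 0 \<and> bl!j = i') \<or> (i = i' \<and> bl!j = 0) then nabla_R nn gg l x (bl[j := s i']) else 0)) = 0"
    by (intro sum.neutral ballI) (simp add: zs)
  have "nabla_R nn gg (Suc l) x ([0, i, i, s i] @ replicate (Suc l) i) = F i (Suc (Suc l)) (x i)"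
    unfolding lst e STEP[OF B A lbl sbl cn] pdv zz by simp
  then show ?case by simp
qed

lemma claim2: assumes i: "1 \<le> i" "i \<le> k"
  shows "\<exists>N E c. finite E \<and> (\<forall>x. nabla_R nn gg l x ([0, i, i, 0] @ replicate l i) = jet_poly N E c (\<lambda>j. F i j (x i)))"
proof -
  obtain G where B: "BlkG (4 + l) (nabla_R nn gg l) G" using Inv_all by blast
  define js where "js = [0, i, i, 0] @ replicate l i"
  have ljs: "length js = 4 + l" by (simp add: js_def)
  have sjs: "set js \<subseteq> {..<nn}" using i by (auto simp: js_def nn_def)
  have "nabla_R nn gg l x js = G js i (x i)" for x
  proof -
    have "nabla_R nn gg l x js = (\<Sum>i'\<in>{1..k}. if okblk i' js then G js i' (x i') else 0)"
      using B ljs sjs by (simp add: BlkG_def)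
    also have "\<dots> = (if okblk i js then G js i (x i) else 0)"
    proof (rule sum_single)
      fix i' assume "i' \<in> {1..k}" "i' \<noteq> i"
      then have "\<not> okblk i' js" using i by (auto simp: okblk_def js_def blk_def sidx_def)
      then show "(if okblk i' js then G js i' (x i') else 0) = 0" by simp
    qed (use i in auto)
    also have "\<dots> = G js i (x i)"
    proof -
      have "okblk i js" using i by (auto simp: okblk_def js_def blk_def cnt_def filter_replicate)
      then show ?thesis by simp
    qed
    finally show ?thesis .
  qed
  moreover have "good i (G js i)" using B i by (simp add: BlkG_def)
  then obtain N E c where "finite E" "\<forall>t. G js i t = jet_poly N E c (\<lambda>j. F i j t)"
    using good_JP unfolding JP_def by blast
  ultimately show ?thesis unfolding js_def by auto
qed

lemma claim34: assumes l: "l \<ge> 1" and c: "c = 0 \<or> (\<exists>i. 1 \<le> i \<and> i \<le> k \<and> c = s i)"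
    and Xs: "length Xs = 4" and Ys: "length Ys = l - 1"
  shows "tensor_apply nn (nabla_R nn gg l) x (Xs @ Ys @ [cvec c]) = 0"
proof -
  obtain G where B: "BlkG (4 + (l-1)) (nabla_R nn gg (l-1)) G" and A: "Aprop (4 + (l-1)) (nabla_R nn gg (l-1))"
    using Inv_all by blast
  have e: "nabla_R nn gg l = cov_tensor nn gg (nabla_R nn gg (l-1))"
    using l by (cases l) (simp_all add: nabla_R_def)
  define vs where "vs = Xs @ Ys @ [cvec c]"
  have lvs: "length vs = Suc (4 + (l-1))" using Xs Ys l by (simp add: vs_def)
  have lastv: "vs ! (4 + (l-1)) = cvec c" using Xs Ys by (simp add: vs_def nth_append)
  show ?thesis unfolding vs_def[symmetric] tensor_apply_def
  proof (rule sum.neutral, intro ballI)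
    fix "is" assume "is \<in> {is. length is = length vs \<and> set is \<subseteq> {..<nn}}"
    then have lis: "length is = Suc (4 + (l-1))" and sis: "set is \<subseteq> {..<nn}" using lvs by auto
    show "nabla_R nn gg l x is * (\<Prod>j<length vs. (vs ! j) (is ! j)) = 0"
    proof (cases "is ! (4 + (l-1)) = c")
      case True
      obtain bl where isd: "is = bl @ [last is]" and lbl: "length bl = 4 + (l-1)" using snoc_split[OF lis] by blast
      have "is \<noteq> []" using lis by auto
      then have "last is = is ! (4 + (l-1))" using lis by (simp add: last_conv_nth)
      then have isd': "is = bl @ [c]" using isd True by simp
      have sbl: "set bl \<subseteq> {..<nn}" using sis isd' by auto
      have "cov_tensor nn gg (nabla_R nn gg (l-1)) x (bl @ [c]) = 0"
        using c nabla_0[OF B A lbl sbl] nabla_s[OF B A lbl sbl] by auto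
      then show ?thesis unfolding e isd'[symmetric] by simp
    next
      case False
      have "(\<Prod>j<length vs. (vs ! j) (is ! j)) = 0"
        by (rule prod_zero) (use lvs lastv False in \<open>auto simp: cvec_def intro!: bexI[of _ "4 + (l-1)"]\<close>)
      then show ?thesis by simp
    qed
  qed
qed

lemma main: "\<forall>l\<ge>1. \<forall>i\<in>{1..k}.
     (\<forall>x. nabla_R (3*k+2) (gF k eps f) l x ([0, i, i, sidx k i] @ replicate l i)
          = (deriv ^^ (l+1)) (f i) (x i))
   \<and> (\<exists>N E c. finite E \<and> (\<forall>x. nabla_R (3*k+2) (gF k eps f) l x ([0, i, i, 0] @ replicate l i)
          = jet_poly N E c (\<lambda>j. (deriv ^^ j) (f i) (x i))))
   \<and> (\<forall>x Xs Ys. length Xs = 4 \<longrightarrow> length Ys = l - 1 \<longrightarrow>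
        tensor_apply (3*k+2) (nabla_R (3*k+2) (gF k eps f) l) x (Xs @ Ys @ [cvec (sidx k i)]) = 0)
   \<and> (\<forall>x Xs Ys. length Xs = 4 \<longrightarrow> length Ys = l - 1 \<longrightarrow>
        tensor_apply (3*k+2) (nabla_R (3*k+2) (gF k eps f) l) x (Xs @ Ys @ [cvec 0]) = 0)"
  unfolding nn_def[symmetric]
proof (intro allI impI ballI conjI)
  fix l i :: nat and x :: "nat \<Rightarrow> real" assume l: "1 \<le> l" and i: "i \<in> {1..k}"
  show "nabla_R nn gg l x ([0, i, i, s i] @ replicate l i) = (deriv ^^ (l+1)) (f i) (x i)"
    using claim1[of i l x] i l by simp
next
  fix l i :: nat assume l: "1 \<le> l" and i: "i \<in> {1..k}"
  show "\<exists>N E c. finite E \<and> (\<forall>x. nabla_R nn gg l x ([0, i, i, 0] @ replicate l i) = jet_poly N E c (\<lambda>j. (deriv ^^ j) (f i) (x i)))"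
    using claim2[of i l] i by simp
next
  fix l i :: nat and x :: "nat \<Rightarrow> real" and Xs Ys :: "(nat \<Rightarrow> real) list" assume l: "1 \<le> l" and i: "i \<in> {1..k}" and "length Xs = 4" "length Ys = l - 1"
  then show "tensor_apply nn (nabla_R nn gg l) x (Xs @ Ys @ [cvec (s i)]) = 0"
    by (intro claim34) auto
next
  fix l i :: nat and x :: "nat \<Rightarrow> real" and Xs Ys :: "(nat \<Rightarrow> real) list" assume l: "1 \<le> l" and i: "i \<in> {1..k}" and "length Xs = 4" "length Ys = l - 1"
  then show "tensor_apply nn (nabla_R nn gg l) x (Xs @ Ys @ [cvec 0]) = 0"
    by (intro claim34) auto
qed

end
theorem lemma5p1:
  fixes k :: nat and eps :: "nat \<Rightarrow> real" and f :: "nat \<Rightarrow> real \<Rightarrow> real"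
  assumes k: "k \<ge> 1"
    and eps: "\<forall>i\<in>{1..k}. eps i = 1 \<or> eps i = -1"
    and smooth: "\<forall>i\<in>{1..k}. \<forall>m t. (deriv ^^ m) (f i) differentiable (at t)"
  shows "\<forall>l\<ge>1. \<forall>i\<in>{1..k}.
     (\<forall>x. nabla_R (3*k+2) (gF k eps f) l x ([0, i, i, sidx k i] @ replicate l i)
          = (deriv ^^ (l+1)) (f i) (x i))
   \<and> (\<exists>N E c. finite E \<and> (\<forall>x. nabla_R (3*k+2) (gF k eps f) l x ([0, i, i, 0] @ replicate l i)
          = jet_poly N E c (\<lambda>j. (deriv ^^ j) (f i) (x i))))
   \<and> (\<forall>x Xs Ys. length Xs = 4 \<longrightarrow> length Ys = l - 1 \<longrightarrow>
        tensor_apply (3*k+2) (nabla_R (3*k+2) (gF k eps f) l) x (Xs @ Ys @ [cvec (sidx k i)]) = 0)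
   \<and> (\<forall>x Xs Ys. length Xs = 4 \<longrightarrow> length Ys = l - 1 \<longrightarrow>
        tensor_apply (3*k+2) (nabla_R (3*k+2) (gF k eps f) l) x (Xs @ Ys @ [cvec 0]) = 0)"
proof -
  interpret MF k eps f using assms by unfold_locales
  show ?thesis by (rule main)
qed

end
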